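(* The GIT quotient $X=T\backslash\backslash (G_{2,6})^{ss}_T(\mathcal{L}(3\omega_2))$ is a complete intersection variety.
   Context: $G=SL(6,\mathbb{C})$, $T$ its diagonal maximal torus, $G_{2,6}$ the Grassmannian of 2-planes in $\mathbb{C}^6$ in its Plücker embedding, $\mathcal{L}(3\omega_2)=\mathcal{O}(3)$ with natural $T$-linearization. $X=\mathrm{Proj}\bigoplus_{d\ge0}H^0(G_{2,6},\mathcal{L}(3\omega_2)^{\otimes d})^T$, considered as a projective variety embedded by the degree-one invariants (the homogeneous coordinate ring is generated in degree one). *)

theory Defs
  imports Complex_Main "HOL-Library.Poly_Mapping"
begin

type_synonym mpoly = "(nat \<Rightarrow>\<^sub>0 nat) \<Rightarrow>\<^sub>0 complex"

definition meval :: "(nat \<Rightarrow> complex) \<Rightarrow> mpoly \<Rightarrow> complex" where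
  "meval a f = (\<Sum>m\<in>Poly_Mapping.keys f. Poly_Mapping.lookup f m * (\<Prod>i\<in>Poly_Mapping.keys m. a i ^ Poly_Mapping.lookup m i))"

definition tdeg :: "(nat \<Rightarrow>\<^sub>0 nat) \<Rightarrow> nat" where
  "tdeg m = sum (Poly_Mapping.lookup m) (Poly_Mapping.keys m)"

definition homog :: "nat \<Rightarrow> mpoly \<Rightarrow> bool" where
  "homog d f \<longleftrightarrow> (\<forall>m\<in>Poly_Mapping.keys f. tdeg m = d)"

definition vars :: "mpoly \<Rightarrow> nat set" where
  "vars f = \<Union> (Poly_Mapping.keys ` Poly_Mapping.keys f)"

text \<open>Plucker coordinates p_ij (0 \<le> i < j < 6), enumerated as variables 0..14.\<close>
definition plucker_pairs :: "(nat \<times> nat) list" where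
  "plucker_pairs = [(i, j). i \<leftarrow> [0..<6], j \<leftarrow> [Suc i..<6]]"

text \<open>A 2x6 complex matrix M (rows 0,1; columns 0..5) spans a point of the affine cone over
  G(2,6); its Plucker coordinates are the 2x2 minors.\<close>
definition pl :: "(nat \<Rightarrow> nat \<Rightarrow> complex) \<Rightarrow> nat \<Rightarrow> complex" where
  "pl M k = (case plucker_pairs ! k of (i, j) \<Rightarrow> M 0 i * M 1 j - M 0 j * M 1 i)"

definition torus :: "(nat \<Rightarrow> complex) \<Rightarrow> bool" where
  "torus t \<longleftrightarrow> (\<forall>i<6. t i \<noteq> 0) \<and> (\<Prod>i<6. t i) = 1"

text \<open>Action of t on the matrix (columns scaled), so p_ij is multiplied by t_i t_j.\<close>
definition colscale :: "(nat \<Rightarrow> nat \<Rightarrow> complex) \<Rightarrow> (nat \<Rightarrow> complex) \<Rightarrow> (nat \<Rightarrow> nat \<Rightarrow> complex)" where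
  "colscale M t = (\<lambda>r c. M r c * t c)"

text \<open>H^0(G_{2,6}, L(3 omega_2)^d)^T: restrictions to the cone of degree-3d forms in the
  Plucker coordinates (G_{2,6} is projectively normal), which are T-invariant.\<close>
definition inv_sections :: "nat \<Rightarrow> ((nat \<Rightarrow> nat \<Rightarrow> complex) \<Rightarrow> complex) set" where
  "inv_sections d =
     {F. (\<exists>f. vars f \<subseteq> {..<15} \<and> homog (3 * d) f \<and> F = (\<lambda>M. meval (pl M) f))
         \<and> (\<forall>t M. torus t \<longrightarrow> F (colscale M t) = F M)}"

definition is_basis_deg1 :: "((nat \<Rightarrow> nat \<Rightarrow> complex) \<Rightarrow> complex) list \<Rightarrow> bool" where
  "is_basis_deg1 fs \<longleftrightarrow>
     set fs \<subseteq> inv_sections 1 \<and>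
     (\<forall>c. (\<forall>M. (\<Sum>k<length fs. c k * (fs ! k) M) = 0) \<longrightarrow> (\<forall>k<length fs. c k = 0)) \<and>
     (\<forall>F\<in>inv_sections 1. \<exists>c. F = (\<lambda>M. \<Sum>k<length fs. c k * (fs ! k) M))"

text \<open>Homogeneous ideal of X in C[y_0..y_{N-1}] for the embedding by the basis fs:
  the kernel of y_k \<mapsto> fs_k.\<close>
definition ideal_of :: "((nat \<Rightarrow> nat \<Rightarrow> complex) \<Rightarrow> complex) list \<Rightarrow> mpoly set" where
  "ideal_of fs = {g. vars g \<subseteq> {..<length fs} \<and> (\<forall>M. meval (\<lambda>k. (fs ! k) M) g = 0)}"

definition gen_ideal :: "nat \<Rightarrow> mpoly list \<Rightarrow> mpoly set" where
  "gen_ideal N gs = {(\<Sum>i<length gs. h i * gs ! i) | h. \<forall>i<length gs. vars (h i) \<subseteq> {..<N}}"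

definition regular_seq :: "nat \<Rightarrow> mpoly list \<Rightarrow> bool" where
  "regular_seq N gs \<longleftrightarrow> 1 \<notin> gen_ideal N gs \<and>
     (\<forall>k<length gs. \<forall>h. vars h \<subseteq> {..<N} \<longrightarrow>
        h * gs ! k \<in> gen_ideal N (take k gs) \<longrightarrow> h \<in> gen_ideal N (take k gs))"

definition complete_intersection :: "nat \<Rightarrow> mpoly set \<Rightarrow> bool" where
  "complete_intersection N I \<longleftrightarrow>
     (\<exists>gs. (\<forall>g\<in>set gs. vars g \<subseteq> {..<N} \<and> (\<exists>d>0. homog d g)) \<and>
           regular_seq N gs \<and> gen_ideal N gs = I)"

end

theory Submission
  imports Defs "HOL-Computational_Algebra.Polynomial_Factorial" "HOL-Computational_Algebra.Field_as_Ring"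
begin

locale rhom =
  fixes \<phi> :: "'a::comm_ring_1 \<Rightarrow> 'b::comm_ring_1"
  assumes hadd: "\<phi> (x + y) = \<phi> x + \<phi> y"
    and hmult: "\<phi> (x * y) = \<phi> x * \<phi> y"
    and hone: "\<phi> 1 = 1"
begin
lemma hzero[simp]: "\<phi> 0 = 0"
  using hadd[of 0 0] by simp
lemma hminus: "\<phi> (- x) = - \<phi> x"
proof -
  have "\<phi> x + \<phi> (-x) = 0" using hadd[of x "-x"] by simp
  then show ?thesis by (metis neg_eq_iff_add_eq_0)
qed
lemma hdiff: "\<phi> (x - y) = \<phi> x - \<phi> y"
  using hadd[of x "-y"] hminus[of y] by simp
lemma hsum: "\<phi> (sum f A) = sum (\<lambda>x. \<phi> (f x)) A"
  by (induction A rule: infinite_finite_induct) (auto simp: hadd)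
lemma hprod: "\<phi> (prod f A) = prod (\<lambda>x. \<phi> (f x)) A"
  by (induction A rule: infinite_finite_induct) (auto simp: hmult hone)
lemma hpower: "\<phi> (x ^ n) = \<phi> x ^ n"
  by (induction n) (auto simp: hmult hone)
lemma hof_nat: "\<phi> (of_nat n) = of_nat n"
  by (induction n) (auto simp: hadd hone)
lemma hnumeral: "\<phi> (numeral n) = numeral n"
  using hof_nat[of "numeral n"] by simp
lemmas hsimps = hadd hmult hone hminus hdiff hsum hprod hpower hof_nat hnumeral
end

lemma rhom_id: "rhom (\<lambda>x. x)" by unfold_locales auto
lemma rhom_comp: "rhom f \<Longrightarrow> rhom g \<Longrightarrow> rhom (\<lambda>x. g (f x))"
  unfolding rhom_def by auto

definition mmon :: "(nat \<Rightarrow> 'b::comm_ring_1) \<Rightarrow> (nat \<Rightarrow>\<^sub>0 nat) \<Rightarrow> 'b" where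
  "mmon a m = (\<Prod>i\<in>Poly_Mapping.keys m. a i ^ Poly_Mapping.lookup m i)"

definition mev :: "(complex \<Rightarrow> 'b::comm_ring_1) \<Rightarrow> (nat \<Rightarrow> 'b) \<Rightarrow> mpoly \<Rightarrow> 'b" where
  "mev \<phi> a f = (\<Sum>m\<in>Poly_Mapping.keys f. \<phi> (Poly_Mapping.lookup f m) * mmon a m)"

lemma meval_mev: "meval a f = mev (\<lambda>x. x) a f"
  unfolding meval_def mev_def mmon_def by simp

lemma mono_superset: "finite S \<Longrightarrow> Poly_Mapping.keys m \<subseteq> S \<Longrightarrow>
   mmon a m = (\<Prod>i\<in>S. a i ^ Poly_Mapping.lookup m i)"
  unfolding mmon_def
  by (rule prod.mono_neutral_left) (auto simp: in_keys_iff)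

lemma mono_add: "mmon a (m + n) = mmon a m * mmon a n"
proof -
  let ?S = "Poly_Mapping.keys m \<union> Poly_Mapping.keys n"
  have "mmon a (m + n) = (\<Prod>i\<in>?S. a i ^ Poly_Mapping.lookup (m+n) i)"
    by (rule mono_superset) (auto simp: keys_add)
  also have "\<dots> = (\<Prod>i\<in>?S. a i ^ Poly_Mapping.lookup m i) * (\<Prod>i\<in>?S. a i ^ Poly_Mapping.lookup n i)"
    by (simp add: lookup_add power_add prod.distrib)
  also have "\<dots> = mmon a m * mmon a n"
    by (subst (1 2) mono_superset[of ?S]) auto
  finally show ?thesis .
qed

lemma mono_zero[simp]: "mmon a 0 = 1" by (simp add: mmon_def)

lemma mono_comp: "rhom \<psi> \<Longrightarrow> \<psi> (mmon a m) = mmon (\<lambda>i. \<psi> (a i)) m"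
  unfolding mmon_def by (simp add: rhom.hprod rhom.hpower)

locale chom = rhom "\<phi> :: complex \<Rightarrow> 'b::comm_ring_1" for \<phi>

context chom begin
lemma mev_superset: "finite S \<Longrightarrow> Poly_Mapping.keys f \<subseteq> S \<Longrightarrow>
   mev \<phi> a f = (\<Sum>m\<in>S. \<phi> (Poly_Mapping.lookup f m) * mmon a m)"
  unfolding mev_def
  by (rule sum.mono_neutral_left) (auto simp: in_keys_iff)

lemma mev_add: "mev \<phi> a (f + g) = mev \<phi> a f + mev \<phi> a g"
proof -
  let ?S = "Poly_Mapping.keys f \<union> Poly_Mapping.keys g"
  have "mev \<phi> a (f + g) = (\<Sum>m\<in>?S. \<phi> (Poly_Mapping.lookup (f+g) m) * mmon a m)"
    by (rule mev_superset) (auto simp: keys_add)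
  also have "\<dots> = (\<Sum>m\<in>?S. \<phi> (Poly_Mapping.lookup f m) * mmon a m) + (\<Sum>m\<in>?S. \<phi> (Poly_Mapping.lookup g m) * mmon a m)"
    by (simp add: lookup_add hadd distrib_right sum.distrib)
  also have "\<dots> = mev \<phi> a f + mev \<phi> a g"
    by (subst (1 2) mev_superset[of ?S]) auto
  finally show ?thesis .
qed

lemma mev_zero[simp]: "mev \<phi> a 0 = 0" by (simp add: mev_def)

lemma mev_sum: "mev \<phi> a (sum f A) = (\<Sum>x\<in>A. mev \<phi> a (f x))"
  by (induction A rule: infinite_finite_induct) (auto simp: mev_add)

lemma mev_single: "mev \<phi> a (Poly_Mapping.single m c) = \<phi> c * mmon a m"
  by (cases "c = 0") (auto simp: mev_def)

lemma mev_uminus: "mev \<phi> a (- f) = - mev \<phi> a f"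
proof -
  have "mev \<phi> a f + mev \<phi> a (-f) = 0" using mev_add[where f=f and g="-f"] by simp
  then show ?thesis by (metis neg_eq_iff_add_eq_0)
qed

lemma mev_diff: "mev \<phi> a (f - g) = mev \<phi> a f - mev \<phi> a g"
  using mev_add[where f=f and g="-g"] mev_uminus[where f=g] by simp
end

lemma pm_expand: "(p::'a \<Rightarrow>\<^sub>0 'b::comm_monoid_add) = (\<Sum>m\<in>Poly_Mapping.keys p. Poly_Mapping.single m (Poly_Mapping.lookup p m))"
proof (rule poly_mapping_eqI)
  fix k
  show "Poly_Mapping.lookup p k = Poly_Mapping.lookup (\<Sum>m\<in>Poly_Mapping.keys p. Poly_Mapping.single m (Poly_Mapping.lookup p m)) k"
    by (cases "k \<in> Poly_Mapping.keys p")
       (auto simp: lookup_sum lookup_single when_def in_keys_iff sum.delta)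
qed

context chom begin
lemma mev_mult: "mev \<phi> a (f * g) = mev \<phi> a f * mev \<phi> a g"
proof -
  have "f * g = (\<Sum>m\<in>Poly_Mapping.keys f. Poly_Mapping.single m (Poly_Mapping.lookup f m)) *
                (\<Sum>n\<in>Poly_Mapping.keys g. Poly_Mapping.single n (Poly_Mapping.lookup g n))"
    by (subst (1) pm_expand[of f], subst (1) pm_expand[of g]) simp
  also have "\<dots> = (\<Sum>m\<in>Poly_Mapping.keys f. \<Sum>n\<in>Poly_Mapping.keys g.
       Poly_Mapping.single (m+n) (Poly_Mapping.lookup f m * Poly_Mapping.lookup g n))"
    apply (simp add: sum_distrib_left sum_distrib_right mult_single)
    apply (rule sum.swap)
    done
  finally have "mev \<phi> a (f * g) = (\<Sum>m\<in>Poly_Mapping.keys f. \<Sum>n\<in>Poly_Mapping.keys g.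
       \<phi> (Poly_Mapping.lookup f m) * mmon a m * (\<phi> (Poly_Mapping.lookup g n) * mmon a n))"
    by (simp add: mev_sum mev_single hmult mono_add mult_ac)
  also have "\<dots> = mev \<phi> a f * mev \<phi> a g"
    apply (simp add: mev_def sum_distrib_left sum_distrib_right)
    apply (rule sum.swap)
    done
  finally show ?thesis .
qed

lemma mev_one: "mev \<phi> a 1 = 1"
proof -
  have "mev \<phi> a 1 = mev \<phi> a (Poly_Mapping.single 0 1)" by simp
  also have "\<dots> = 1" by (simp only: mev_single) (simp add: hone)
  finally show ?thesis .
qed

lemma rhom_mev: "rhom (mev \<phi> a)"
  by unfold_locales (auto simp: mev_add mev_mult mev_one)
end

lemma rhom_mev_id: "rhom (mev (\<lambda>x. x) a)"
  using chom.rhom_mev[of "\<lambda>x. x"] rhom_id unfolding chom_def by blast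

lemma mev_comp: "rhom \<psi> \<Longrightarrow> \<psi> (mev \<phi> a f) = mev (\<lambda>c. \<psi> (\<phi> c)) (\<lambda>i. \<psi> (a i)) f"
  unfolding mev_def by (simp add: rhom.hsum rhom.hmult mono_comp)

definition Const :: "complex \<Rightarrow> mpoly" where "Const c = Poly_Mapping.single 0 c"
definition Var :: "nat \<Rightarrow> mpoly" where "Var i = Poly_Mapping.single (Poly_Mapping.single i 1) 1"

lemma rhom_Const: "rhom Const"
  by unfold_locales (auto simp: Const_def single_add mult_single)

lemma mev_Const: "rhom \<phi> \<Longrightarrow> mev \<phi> a (Const c) = \<phi> c"
  by (simp add: Const_def chom.mev_single chom_def)

lemma mono_single: "mmon a (Poly_Mapping.single i k) = a i ^ k"
  by (cases "k = 0") (auto simp: mmon_def)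

lemma mev_Var: "rhom \<phi> \<Longrightarrow> mev \<phi> a (Var i) = a i"
  by (simp add: Var_def chom.mev_single chom_def rhom.hone mono_single)

lemma Var_pow: "Var i ^ k = Poly_Mapping.single (Poly_Mapping.single i k) 1"
  by (induction k) (auto simp: Var_def mult_single single_add[symmetric])

lemma prod_single: "(\<Prod>i\<in>A. Poly_Mapping.single (g i) (1::complex)) = Poly_Mapping.single (\<Sum>i\<in>A. g i) 1"
  by (induction A rule: infinite_finite_induct) (auto simp: mult_single)

lemma mev_Var_id: "mev Const Var f = f"
proof -
  have "mev Const Var f = (\<Sum>m\<in>Poly_Mapping.keys f. Const (Poly_Mapping.lookup f m) * mmon Var m)"
    by (simp add: mev_def)
  also have "\<dots> = (\<Sum>m\<in>Poly_Mapping.keys f. Poly_Mapping.single m (Poly_Mapping.lookup f m))"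
  proof (rule sum.cong[OF refl])
    fix m
    have "mmon Var m = (\<Prod>i\<in>Poly_Mapping.keys m. Poly_Mapping.single (Poly_Mapping.single i (Poly_Mapping.lookup m i)) 1)"
      by (simp add: mmon_def Var_pow)
    also have "\<dots> = Poly_Mapping.single m 1"
      by (simp add: prod_single pm_expand[of m, symmetric])
    finally show "Const (Poly_Mapping.lookup f m) * mmon Var m = Poly_Mapping.single m (Poly_Mapping.lookup f m)"
      by (simp add: Const_def mult_single)
  qed
  also have "\<dots> = f" by (rule pm_expand[symmetric])
  finally show ?thesis .
qed

lemma mev_cong: "(\<And>i. i \<in> vars f \<Longrightarrow> a i = b i) \<Longrightarrow> mev \<phi> a f = mev \<phi> b f"
  unfolding mev_def mmon_def
proof (rule sum.cong[OF refl])
  fix m assume m: "m \<in> Poly_Mapping.keys f" and h: "\<And>i. i \<in> vars f \<Longrightarrow> a i = b i"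
  have "(\<Prod>i\<in>Poly_Mapping.keys m. a i ^ Poly_Mapping.lookup m i) = (\<Prod>i\<in>Poly_Mapping.keys m. b i ^ Poly_Mapping.lookup m i)"
    by (rule prod.cong[OF refl]) (use m h in \<open>auto simp: vars_def intro!: arg_cong2[where f="(^)"]\<close>)
  then show "\<phi> (Poly_Mapping.lookup f m) * (\<Prod>i\<in>Poly_Mapping.keys m. a i ^ Poly_Mapping.lookup m i) =
        \<phi> (Poly_Mapping.lookup f m) * (\<Prod>i\<in>Poly_Mapping.keys m. b i ^ Poly_Mapping.lookup m i)" by simp
qed

lemma vars_add: "vars (f + g) \<subseteq> vars f \<union> vars g"
  unfolding vars_def using keys_add[of f g] by auto
lemma vars_mult: "vars (f * g) \<subseteq> vars f \<union> vars g"
proof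
  fix i assume "i \<in> vars (f * g)"
  then obtain m where m: "m \<in> Poly_Mapping.keys (f*g)" "i \<in> Poly_Mapping.keys m" unfolding vars_def by auto
  then obtain a b where ab: "m = a + b" "a \<in> Poly_Mapping.keys f" "b \<in> Poly_Mapping.keys g"
    using keys_mult[of f g] by blast
  then have "i \<in> Poly_Mapping.keys a \<union> Poly_Mapping.keys b" using m keys_add[of a b] by auto
  then show "i \<in> vars f \<union> vars g" using ab unfolding vars_def by auto
qed
lemma vars_uminus: "vars (- f) = vars f" by (simp add: vars_def)
lemma vars_diff: "vars (f - g) \<subseteq> vars f \<union> vars g"
  using vars_add[of f "-g"] by (simp add: vars_uminus)
lemma vars_Const: "vars (Const c) = {}" by (simp add: vars_def Const_def)
lemma vars_Var: "vars (Var i) = {i}" by (simp add: vars_def Var_def)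
lemma vars_sum: "vars (sum f A) \<subseteq> (\<Union>x\<in>A. vars (f x))"
  by (induction A rule: infinite_finite_induct) (auto simp: vars_def dest: subsetD[OF keys_add])
lemma vars_zero: "vars 0 = {}" by (simp add: vars_def)
lemma vars_one: "vars 1 = {}" by (simp add: vars_def)

lemma tdeg_superset: "finite S \<Longrightarrow> Poly_Mapping.keys m \<subseteq> S \<Longrightarrow> tdeg m = (\<Sum>i\<in>S. Poly_Mapping.lookup m i)"
  unfolding tdeg_def by (rule sum.mono_neutral_left) (auto simp: in_keys_iff)
lemma tdeg_add: "tdeg (m + n) = tdeg m + tdeg n"
proof -
  let ?S = "Poly_Mapping.keys m \<union> Poly_Mapping.keys n"
  have "tdeg (m + n) = (\<Sum>i\<in>?S. Poly_Mapping.lookup (m+n) i)" by (rule tdeg_superset) (auto simp: keys_add)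
  also have "\<dots> = (\<Sum>i\<in>?S. Poly_Mapping.lookup m i) + (\<Sum>i\<in>?S. Poly_Mapping.lookup n i)"
    by (simp add: lookup_add sum.distrib)
  also have "\<dots> = tdeg m + tdeg n" by (subst (1 2) tdeg_superset[of ?S]) auto
  finally show ?thesis .
qed
lemma homog_add: "homog d f \<Longrightarrow> homog d g \<Longrightarrow> homog d (f + g)"
  unfolding homog_def using keys_add[of f g] by auto
lemma homog_mult: "homog d f \<Longrightarrow> homog e g \<Longrightarrow> homog (d + e) (f * g)"
  unfolding homog_def using keys_mult[of f g] by (force simp: tdeg_add)
lemma homog_uminus: "homog d f \<Longrightarrow> homog d (- f)"
  unfolding homog_def by simp
lemma homog_diff: "homog d f \<Longrightarrow> homog d g \<Longrightarrow> homog d (f - g)"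
  using homog_add[of d f "-g"] homog_uminus[of d g] by simp
lemma homog_zero: "homog d 0" by (simp add: homog_def)
lemma homog_sum: "(\<And>x. x \<in> A \<Longrightarrow> homog d (f x)) \<Longrightarrow> homog d (sum f A)"
  by (induction A rule: infinite_finite_induct) (auto simp: homog_zero homog_add)
lemma homog_Const: "homog 0 (Const c)" by (simp add: homog_def Const_def tdeg_def)
lemma homog_Var: "homog 1 (Var i)" by (simp add: homog_def Var_def tdeg_def)
lemma homog_Const_mult: "homog d f \<Longrightarrow> homog d (Const c * f)"
  using homog_mult[OF homog_Const, of d f c] by simp

type_synonym R1 = "complex poly"
type_synonym R2 = "complex poly poly"
type_synonym R3 = "complex poly poly poly"
type_synonym R4 = "complex poly poly poly poly"
type_synonym R5 = "complex poly poly poly poly poly"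

definition evp :: "('a::comm_ring_1 \<Rightarrow> 'b::comm_ring_1) \<Rightarrow> 'b \<Rightarrow> 'a poly \<Rightarrow> 'b" where
  "evp \<phi> x p = poly (map_poly \<phi> p) x"

context rhom begin
lemma map_poly_hadd: "map_poly \<phi> (p + q) = map_poly \<phi> p + map_poly \<phi> q"
  by (rule poly_eqI) (simp add: coeff_map_poly hadd)
lemma map_poly_hmult: "map_poly \<phi> (p * q) = map_poly \<phi> p * map_poly \<phi> q"
  by (rule poly_eqI) (simp add: coeff_map_poly coeff_mult hsum hmult)
lemma map_poly_hone: "map_poly \<phi> 1 = 1"
  by (rule poly_eqI) (simp add: coeff_map_poly hone)
lemma rhom_evp: "rhom (evp \<phi> x)"
  by unfold_locales (simp_all add: evp_def map_poly_hadd map_poly_hmult map_poly_hone)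
lemma evp_const: "evp \<phi> x [:c:] = \<phi> c"
  by (cases "c = 0") (simp_all add: evp_def map_poly_pCons)
lemma evp_X: "evp \<phi> x [:0,1:] = x"
  by (simp add: evp_def map_poly_pCons hone)
lemma evp_pCons: "evp \<phi> x (pCons c p) = \<phi> c + x * evp \<phi> x p"
  by (simp add: evp_def map_poly_pCons)
lemma evp_smult: "evp \<phi> x (smult c p) = \<phi> c * evp \<phi> x p"
proof -
  have "smult c p = [:c:] * p" by simp
  then show ?thesis using rhom.hmult[OF rhom_evp, of x "[:c:]" p] by (simp add: evp_const)
qed
end

lemma rhom_constp: "rhom (\<lambda>c. [:c:])"
  by unfold_locales auto

definition good :: "nat \<Rightarrow> ((nat \<Rightarrow> complex) \<Rightarrow> 'a::zero \<Rightarrow> complex) \<Rightarrow> bool" where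
  "good k E \<longleftrightarrow> (\<forall>a a'. (\<forall>i<k. a i = a' i) \<longrightarrow> E a = E a') \<and> (\<forall>p. (\<forall>a. E a p = 0) \<longrightarrow> p = 0)"

lemma good_step:
  assumes g: "good k E" and h: "\<And>a. rhom (E a)"
  shows "good (Suc k) (\<lambda>a. evp (E a) (a k))"
  unfolding good_def
proof safe
  fix a a' :: "nat \<Rightarrow> complex" assume "\<forall>i<Suc k. a i = a' i"
  then have "\<forall>i<k. a i = a' i" "a k = a' k" by auto
  with g show "evp (E a) (a k) = evp (E a') (a' k)" unfolding good_def by metis
next
  fix p assume z: "\<forall>a. evp (E a) (a k) p = 0"
  show "p = 0"
  proof (rule ccontr)
    assume "p \<noteq> 0"
    then have "lead_coeff p \<noteq> 0" by simp
    then obtain a where a: "E a (lead_coeff p) \<noteq> 0" using g unfolding good_def by blast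
    let ?q = "map_poly (E a) p"
    have "coeff ?q (degree p) \<noteq> 0" using a rhom.hzero[OF h] by (simp add: coeff_map_poly)
    then have "?q \<noteq> 0" by auto
    then obtain x where x: "poly ?q x \<noteq> 0" using poly_all_0_iff_0 by blast
    let ?a = "a(k := x)"
    have "E ?a = E a" using g unfolding good_def by auto
    then have "evp (E ?a) (?a k) p \<noteq> 0" using x by (simp add: evp_def)
    with z show False by blast
  qed
qed

definition ev0 :: "(nat \<Rightarrow> complex) \<Rightarrow> complex \<Rightarrow> complex" where "ev0 a = (\<lambda>c. c)"
definition ev1 :: "(nat \<Rightarrow> complex) \<Rightarrow> R1 \<Rightarrow> complex" where "ev1 a = evp (ev0 a) (a 0)"
definition ev2 :: "(nat \<Rightarrow> complex) \<Rightarrow> R2 \<Rightarrow> complex" where "ev2 a = evp (ev1 a) (a 1)"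
definition ev3 :: "(nat \<Rightarrow> complex) \<Rightarrow> R3 \<Rightarrow> complex" where "ev3 a = evp (ev2 a) (a 2)"
definition ev4 :: "(nat \<Rightarrow> complex) \<Rightarrow> R4 \<Rightarrow> complex" where "ev4 a = evp (ev3 a) (a 3)"
definition ev5 :: "(nat \<Rightarrow> complex) \<Rightarrow> R5 \<Rightarrow> complex" where "ev5 a = evp (ev4 a) (a 4)"

lemma rhom_ev0: "rhom (ev0 a)" by (simp add: ev0_def rhom_id)
lemma rhom_ev1: "rhom (ev1 a)" unfolding ev1_def by (rule rhom.rhom_evp[OF rhom_ev0])
lemma rhom_ev2: "rhom (ev2 a)" unfolding ev2_def by (rule rhom.rhom_evp[OF rhom_ev1])
lemma rhom_ev3: "rhom (ev3 a)" unfolding ev3_def by (rule rhom.rhom_evp[OF rhom_ev2])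
lemma rhom_ev4: "rhom (ev4 a)" unfolding ev4_def by (rule rhom.rhom_evp[OF rhom_ev3])
lemma rhom_ev5: "rhom (ev5 a)" unfolding ev5_def by (rule rhom.rhom_evp[OF rhom_ev4])

lemma good_ev0: "good 0 ev0" by (simp add: good_def ev0_def)
lemma good_ev1: "good 1 ev1"
  using good_step[OF good_ev0 rhom_ev0] unfolding ev1_def[abs_def] by simp
lemma good_ev2: "good 2 ev2"
  using good_step[OF good_ev1 rhom_ev1] unfolding ev2_def[abs_def] by (simp add: numeral_2_eq_2)
lemma good_ev3: "good 3 ev3"
  using good_step[OF good_ev2 rhom_ev2] unfolding ev3_def[abs_def] by (simp add: numeral_3_eq_3)
lemma good_ev4: "good 4 ev4"
  using good_step[OF good_ev3 rhom_ev3] unfolding ev4_def[abs_def] by (simp add: eval_nat_numeral)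
lemma good_ev5: "good 5 ev5"
  using good_step[OF good_ev4 rhom_ev4] unfolding ev5_def[abs_def] by (simp add: eval_nat_numeral)

definition X1 :: "nat \<Rightarrow> R1" where "X1 i = [:0,1:]"
definition X2 :: "nat \<Rightarrow> R2" where "X2 i = (if i = 1 then [:0,1:] else [:X1 i:])"
definition X3 :: "nat \<Rightarrow> R3" where "X3 i = (if i = 2 then [:0,1:] else [:X2 i:])"
definition X4 :: "nat \<Rightarrow> R4" where "X4 i = (if i = 3 then [:0,1:] else [:X3 i:])"
definition X5 :: "nat \<Rightarrow> R5" where "X5 i = (if i = 4 then [:0,1:] else [:X4 i:])"

lemma ev1_X: "i < 1 \<Longrightarrow> ev1 a (X1 i) = a i"
  by (simp add: ev1_def X1_def rhom.evp_X[OF rhom_ev0])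
lemma ev2_X: "i < 2 \<Longrightarrow> ev2 a (X2 i) = a i"
  by (auto simp: ev2_def X2_def rhom.evp_X[OF rhom_ev1] rhom.evp_const[OF rhom_ev1] ev1_X)
lemma ev3_X: "i < 3 \<Longrightarrow> ev3 a (X3 i) = a i"
  by (auto simp: ev3_def X3_def rhom.evp_X[OF rhom_ev2] rhom.evp_const[OF rhom_ev2] ev2_X)
lemma ev4_X: "i < 4 \<Longrightarrow> ev4 a (X4 i) = a i"
  by (auto simp: ev4_def X4_def rhom.evp_X[OF rhom_ev3] rhom.evp_const[OF rhom_ev3] ev3_X)
lemma ev5_X: "i < 5 \<Longrightarrow> ev5 a (X5 i) = a i"
  by (auto simp: ev5_def X5_def rhom.evp_X[OF rhom_ev4] rhom.evp_const[OF rhom_ev4] ev4_X)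

lemma ev5_const: "ev5 a [:c:] = ev4 a c"
  by (simp add: ev5_def rhom.evp_const[OF rhom_ev4])

lemma plucker_pairs_eq: "plucker_pairs = [(0,1),(0,2),(0,3),(0,4),(0,5),(1,2),(1,3),(1,4),(1,5),(2,3),(2,4),(2,5),(3,4),(3,5),(4,5)]"
  by (simp add: plucker_pairs_def upt_rec)

definition P :: "(nat \<Rightarrow> nat \<Rightarrow> complex) \<Rightarrow> nat \<Rightarrow> nat \<Rightarrow> complex" where
  "P M i j = M 0 i * M 1 j - M 0 j * M 1 i"

lemma pl_vals:
  "pl M 0 = P M 0 1" "pl M 1 = P M 0 2" "pl M 2 = P M 0 3" "pl M 3 = P M 0 4" "pl M 4 = P M 0 5"
  "pl M 5 = P M 1 2" "pl M 6 = P M 1 3" "pl M 7 = P M 1 4" "pl M 8 = P M 1 5"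
  "pl M 9 = P M 2 3" "pl M 10 = P M 2 4" "pl M 11 = P M 2 5"
  "pl M 12 = P M 3 4" "pl M 13 = P M 3 5" "pl M 14 = P M 4 5"
  by (simp_all add: pl_def plucker_pairs_eq P_def)

lemma plucker_rel: "P M i j * P M k l - P M i k * P M j l + P M i l * P M j k = 0"
  unfolding P_def by algebra

definition zf :: "(nat \<Rightarrow> nat \<Rightarrow> complex) \<Rightarrow> nat \<Rightarrow> complex" where
  "zf M j = (if j = 0 then P M 0 4 * P M 1 3 * P M 2 5
        else if j = 1 then P M 0 5 * P M 1 3 * P M 2 4
        else if j = 2 then P M 0 4 * P M 1 2 * P M 3 5
        else if j = 3 then P M 0 5 * P M 1 2 * P M 3 4
        else P M 0 2 * P M 1 4 * P M 3 5)"

definition Qf :: "(nat \<Rightarrow> 'b::comm_ring_1) \<Rightarrow> 'b" where "Qf z = z 0 * z 3 - z 1 * z 2"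
definition Cf :: "(nat \<Rightarrow> 'b::comm_ring_1) \<Rightarrow> 'b" where "Cf z = z 2 * (z 0 - z 1) * (z 1 - z 3)"
definition Gf :: "(nat \<Rightarrow> 'b::comm_ring_1) \<Rightarrow> 'b" where "Gf z = z 4 * Qf z + Cf z"
definition Df :: "(nat \<Rightarrow> 'b::comm_ring_1) \<Rightarrow> 'b" where
  "Df z = (z 0 - z 2) * (z 1 - z 3) * (z 0 - z 2 - z 1 + z 3) * Qf z"

lemma Gf_zf: "Gf (zf M) = 0"
proof -
  have r1: "P M 2 5 * P M 3 4 - P M 2 4 * P M 3 5 = - (P M 2 3 * P M 4 5)"
    using plucker_rel[of M 2 3 4 5] by (simp add: algebra_simps)
  have r2: "P M 0 4 * P M 2 5 - P M 0 5 * P M 2 4 = P M 0 2 * P M 4 5"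
    using plucker_rel[of M 0 2 4 5] by (simp add: algebra_simps)
  have r3: "P M 1 3 * P M 2 4 - P M 1 2 * P M 3 4 = P M 1 4 * P M 2 3"
    using plucker_rel[of M 1 2 3 4] by (simp add: algebra_simps)
  have q0: "Qf (zf M) = P M 0 4 * P M 0 5 * P M 1 2 * P M 1 3 * (P M 2 5 * P M 3 4 - P M 2 4 * P M 3 5)"
    unfolding Qf_def zf_def by (simp add: algebra_simps)
  have c10: "zf M 0 - zf M 1 = P M 1 3 * (P M 0 4 * P M 2 5 - P M 0 5 * P M 2 4)"
    unfolding zf_def by (simp add: algebra_simps)
  have c20: "zf M 1 - zf M 3 = P M 0 5 * (P M 1 3 * P M 2 4 - P M 1 2 * P M 3 4)"
    unfolding zf_def by (simp add: algebra_simps)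
  have "Gf (zf M) = zf M 4 * (P M 0 4 * P M 0 5 * P M 1 2 * P M 1 3 * (- (P M 2 3 * P M 4 5)))
      + zf M 2 * (P M 1 3 * (P M 0 2 * P M 4 5)) * (P M 0 5 * (P M 1 4 * P M 2 3))"
    unfolding Gf_def Cf_def q0 c10 c20 r1 r2 r3 by simp
  also have "\<dots> = 0" by (simp add: zf_def algebra_simps)
  finally show ?thesis .
qed


definition Minv :: "(nat \<Rightarrow> complex) \<Rightarrow> nat \<Rightarrow> nat \<Rightarrow> complex" where
  "Minv z = (let t5 = (z 1 - z 3) / (z 0 - z 2); w = (z 1 - t5 * z 0) / (t5 - 1); lam = w / t5;
      t2 = (z 0 + w) / lam; t3 = (z 2 + w) / lam in
    (\<lambda>r c. if r = 0 then (if c = 0 then lam else if c = 1 then 0 else 1)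
            else (if c = 0 then 0 else if c = 1 then 1 else if c = 2 then t2 else if c = 3 then t3
                  else if c = 4 then 1 else t5)))"

lemma Minv_ok:
  assumes D: "Df z \<noteq> 0" and j: "j < 4"
  shows "zf (Minv z) j = z j"
proof -
  define t5 where "t5 = (z 1 - z 3) / (z 0 - z 2)"
  define w where "w = (z 1 - t5 * z 0) / (t5 - 1)"
  define lam where "lam = w / t5"
  have n1: "z 0 - z 2 \<noteq> 0" and n2: "z 1 - z 3 \<noteq> 0" and n3: "z 0 - z 2 - z 1 + z 3 \<noteq> 0"
    and n4: "z 0 * z 3 - z 1 * z 2 \<noteq> 0"
    using D by (auto simp: Df_def Qf_def)
  have t5nz: "t5 \<noteq> 0" using n1 n2 by (simp add: t5_def)
  have t5n1: "t5 - 1 \<noteq> 0"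
  proof
    assume "t5 - 1 = 0"
    then have "z 1 - z 3 = z 0 - z 2" using n1 by (simp add: t5_def field_simps)
    then show False using n3 by (simp add: algebra_simps)
  qed
  have wnz: "w \<noteq> 0"
  proof
    assume "w = 0"
    then have "z 1 = t5 * z 0" using t5n1 by (simp add: w_def)
    then have "z 1 * (z 0 - z 2) = (z 1 - z 3) * z 0" using n1 by (simp add: t5_def field_simps)
    then show False using n4 by (simp add: algebra_simps)
  qed
  have lnz: "lam \<noteq> 0" using wnz t5nz by (simp add: lam_def)
  have M: "Minv z = (\<lambda>r c. if r = 0 then (if c = 0 then lam else if c = 1 then 0 else 1)
            else (if c = 0 then 0 else if c = 1 then 1 else if c = 2 then (z 0 + w) / lam else if c = 3 then (z 2 + w) / lam
                  else if c = 4 then 1 else t5))"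
    unfolding Minv_def Let_def t5_def w_def lam_def by simp
  define t2 where "t2 = (z 0 + w) / lam"
  define t3 where "t3 = (z 2 + w) / lam"
  have f1: "lam * t2 = z 0 + w" using lnz by (simp add: t2_def)
  have f2: "lam * t3 = z 2 + w" using lnz by (simp add: t3_def)
  have f3: "lam * t5 = w" using t5nz by (simp add: lam_def)
  have f4: "w * (t5 - 1) = z 1 - t5 * z 0" using t5n1 by (simp add: w_def)
  have f5: "t5 * (z 0 - z 2) = z 1 - z 3" using n1 by (simp add: t5_def)
  have M2: "Minv z = (\<lambda>r c. if r = 0 then (if c = 0 then lam else if c = 1 then 0 else 1)
            else (if c = 0 then 0 else if c = 1 then 1 else if c = 2 then t2 else if c = 3 then t3
                  else if c = 4 then 1 else t5))" unfolding M t2_def t3_def ..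
  have e0: "zf (Minv z) 0 = lam * t2 - lam * t5" unfolding zf_def M2 P_def by (simp add: algebra_simps)
  have e1: "zf (Minv z) 1 = t5 * (lam * t2) - lam * t5" unfolding zf_def M2 P_def by (simp add: algebra_simps)
  have e2: "zf (Minv z) 2 = lam * t3 - lam * t5" unfolding zf_def M2 P_def by (simp add: algebra_simps)
  have e3: "zf (Minv z) 3 = t5 * (lam * t3) - lam * t5" unfolding zf_def M2 P_def by (simp add: algebra_simps)
  have e0': "zf (Minv z) 0 = z 0" unfolding e0 f1 f3 by simp
  have e2': "zf (Minv z) 2 = z 2" unfolding e2 f2 f3 by simp
  have e1': "zf (Minv z) 1 = z 1" unfolding e1 f1 f3
  proof -
    have "t5 * (z 0 + w) - w = t5 * z 0 + w * (t5 - 1)" by (simp add: algebra_simps)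
    then show "t5 * (z 0 + w) - w = z 1" unfolding f4 by simp
  qed
  have e3': "zf (Minv z) 3 = z 3" unfolding e3 f2 f3
  proof -
    have "t5 * (z 2 + w) - w = t5 * z 2 + w * (t5 - 1)" by (simp add: algebra_simps)
    also have "\<dots> = z 1 - t5 * (z 0 - z 2)" unfolding f4 by (simp add: algebra_simps)
    finally show "t5 * (z 2 + w) - w = z 3" unfolding f5 by simp
  qed
  show ?thesis using j e0' e1' e2' e3' by (auto simp: less_Suc_eq numeral_eq_Suc)
qed

lemma Qf_hom: "rhom \<psi> \<Longrightarrow> \<psi> (Qf z) = Qf (\<lambda>i. \<psi> (z i))"
  by (simp add: Qf_def rhom.hsimps)
lemma Cf_hom: "rhom \<psi> \<Longrightarrow> \<psi> (Cf z) = Cf (\<lambda>i. \<psi> (z i))"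
  by (simp add: Cf_def rhom.hsimps)
lemma Gf_hom: "rhom \<psi> \<Longrightarrow> \<psi> (Gf z) = Gf (\<lambda>i. \<psi> (z i))"
  by (simp add: Gf_def Qf_hom Cf_hom rhom.hsimps)
lemma Df_hom: "rhom \<psi> \<Longrightarrow> \<psi> (Df z) = Df (\<lambda>i. \<psi> (z i))"
  by (simp add: Df_def Qf_hom rhom.hsimps)

lemma Qf_cong: "(\<And>i. i < 4 \<Longrightarrow> z i = z' i) \<Longrightarrow> Qf z = Qf z'" by (simp add: Qf_def)
lemma Cf_cong: "(\<And>i. i < 4 \<Longrightarrow> z i = z' i) \<Longrightarrow> Cf z = Cf z'" by (simp add: Cf_def)
lemma Df_cong: "(\<And>i. i < 4 \<Longrightarrow> z i = z' i) \<Longrightarrow> Df z = Df z'" by (simp add: Df_def Qf_def)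
lemma Gf_cong: "(\<And>i. i < 5 \<Longrightarrow> z i = z' i) \<Longrightarrow> Gf z = Gf z'" by (simp add: Gf_def Qf_def Cf_def)

definition Q4 :: R4 where "Q4 = Qf X4"
definition C4 :: R4 where "C4 = Cf X4"
definition D4 :: R4 where "D4 = Df X4"
definition G5 :: R5 where "G5 = Gf X5"

lemma ev4_Q4: "ev4 a Q4 = Qf a"
  unfolding Q4_def by (simp add: Qf_hom[OF rhom_ev4]) (rule Qf_cong, simp add: ev4_X)
lemma ev4_C4: "ev4 a C4 = Cf a"
  unfolding C4_def by (simp add: Cf_hom[OF rhom_ev4]) (rule Cf_cong, simp add: ev4_X)
lemma ev4_D4: "ev4 a D4 = Df a"
  unfolding D4_def by (simp add: Df_hom[OF rhom_ev4]) (rule Df_cong, simp add: ev4_X)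
lemma ev5_G5: "ev5 a G5 = Gf a"
  unfolding G5_def by (simp add: Gf_hom[OF rhom_ev5]) (rule Gf_cong, simp add: ev5_X)

lemma G5_eq: "G5 = [:C4, Q4:]"
proof -
  have q: "Qf X5 = [:Q4:]"
    unfolding Q4_def by (simp add: Qf_hom[OF rhom_constp]) (rule Qf_cong, simp add: X5_def)
  have c: "Cf X5 = [:C4:]"
    unfolding C4_def by (simp add: Cf_hom[OF rhom_constp]) (rule Cf_cong, simp add: X5_def)
  show ?thesis unfolding G5_def Gf_def q c by (simp add: X5_def)
qed

lemma Q4_eq: "Q4 = [:- (X3 1 * X3 2), X3 0:]"
  unfolding Q4_def Qf_def by (simp add: X4_def)

lemma irred_dvd: "irreducible p \<Longrightarrow> d dvd p \<Longrightarrow> is_unit d \<or> p dvd d"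
  proof -
  assume irr: "irreducible p" and "d dvd p"
  then obtain k where k: "p = d * k" by (elim dvdE)
  then have "is_unit d \<or> is_unit k" using irreducibleD[OF irr] by blast
  then show ?thesis
  proof
    assume "is_unit k"
    then have "p dvd d" unfolding k by (simp add: mult_unit_dvd_iff)
    then show ?thesis by blast
  qed blast
qed

lemma X30_irred: "irreducible (X3 0)"
proof -
  have "irreducible ([:0,1:] :: complex poly)" by (rule irreducible_linear_field_poly) simp
  then show ?thesis by (simp add: X3_def X2_def X1_def irreducible_const_poly_iff)
qed

lemma X30_nz: "X3 0 \<noteq> 0" using X30_irred by auto

lemma Q4_irred: "irreducible Q4"
  unfolding Q4_eq
proof (rule irreducible_linear_poly)
  show "X3 0 \<noteq> 0" by (rule X30_nz)
  show "coprime (- (X3 1 * X3 2)) (X3 0)"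
  proof (rule coprimeI)
    fix d assume d1: "d dvd - (X3 1 * X3 2)" and d2: "d dvd X3 0"
    show "is_unit d"
    proof (rule ccontr)
      assume "\<not> is_unit d"
      then have "X3 0 dvd d" using irred_dvd[OF X30_irred d2] by blast
      then have "X3 0 dvd - (X3 1 * X3 2)" using d1 dvd_trans by blast
      then obtain h where h: "- (X3 1 * X3 2) = X3 0 * h" by (elim dvdE)
      let ?a = "\<lambda>i::nat. if i = 0 then 0 else (1::complex)"
      have "ev3 ?a (- (X3 1 * X3 2)) = ev3 ?a (X3 0 * h)" using h by simp
      then show False by (simp add: rhom.hsimps[OF rhom_ev3] ev3_X)
    qed
  qed
qed

lemma Q4_nz: "Q4 \<noteq> 0" using Q4_irred by auto

lemma G5_irred: "irreducible G5"
  unfolding G5_eq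
proof (rule irreducible_linear_poly)
  show "Q4 \<noteq> 0" by (rule Q4_nz)
  show "coprime C4 Q4"
  proof (rule coprimeI)
    fix d assume d1: "d dvd C4" and d2: "d dvd Q4"
    show "is_unit d"
    proof (rule ccontr)
      assume "\<not> is_unit d"
      then have "Q4 dvd d" using irred_dvd[OF Q4_irred d2] by blast
      then have "Q4 dvd C4" using d1 dvd_trans by blast
      then obtain h where h: "C4 = Q4 * h" by (elim dvdE)
      let ?a = "\<lambda>i::nat. if i = 0 then 2 else if i = 1 then 1 else if i = 2 then 6 else (3::complex)"
      have "ev4 ?a C4 = ev4 ?a (Q4 * h)" using h by simp
      then show False by (simp add: rhom.hsimps[OF rhom_ev4] ev4_C4 ev4_Q4 Qf_def Cf_def)
    qed
  qed
qed

lemma G5_prime: "prime_elem G5"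
  using G5_irred by (simp add: prime_elem_iff_irreducible)

lemma D4_nz: "D4 \<noteq> 0"
proof
  assume "D4 = 0"
  then have "ev4 (\<lambda>i. if i = 0 then 1 else if i = 3 then 2 else 0) D4 = 0" by (simp add: rhom.hzero[OF rhom_ev4])
  then show False by (simp add: ev4_D4 Df_def Qf_def)
qed

lemma core:
  assumes van: "\<And>M. ev5 (zf M) p = 0"
  shows "G5 dvd p"
proof -
  obtain q r where qr: "pseudo_divmod p G5 = (q, r)" by (cases "pseudo_divmod p G5") auto
  have G5nz: "G5 \<noteq> 0" using G5_irred by auto
  have degG: "degree G5 = 1" using Q4_nz by (simp add: G5_eq)
  have lc: "coeff G5 (degree G5) = Q4" using degG by (simp add: G5_eq)
  define k where "k = Suc (degree p) - degree G5"
  have eq: "smult (Q4 ^ k) p = G5 * q + r" using pseudo_divmod(1)[OF G5nz qr] lc by (simp add: k_def)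
  have "r = 0 \<or> degree r < degree G5" using pseudo_divmod(2)[OF G5nz qr] .
  then have "degree r = 0" using degG by auto
  then have rc: "r = [:coeff r 0:]" using degree_0_id by metis
  define r0 where "r0 = coeff r 0"
  have r0M: "ev4 (zf M) r0 = 0" for M
  proof -
    have "ev5 (zf M) (smult (Q4 ^ k) p) = ev5 (zf M) (G5 * q + r)" using eq by simp
    moreover have "ev5 (zf M) (smult (Q4 ^ k) p) = ev4 (zf M) (Q4 ^ k) * ev5 (zf M) p"
      unfolding ev5_def by (rule rhom.evp_smult[OF rhom_ev4])
    moreover have "ev5 (zf M) (G5 * q + r) = ev5 (zf M) G5 * ev5 (zf M) q + ev5 (zf M) r"
      by (simp add: rhom.hadd[OF rhom_ev5] rhom.hmult[OF rhom_ev5])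
    ultimately have "ev5 (zf M) r = 0" by (simp add: van ev5_G5 Gf_zf)
    then show ?thesis using rc by (metis ev5_const r0_def)
  qed
  have "ev4 z (r0 * D4) = 0" for z
  proof (cases "Df z = 0")
    case True then show ?thesis by (simp add: rhom.hsimps[OF rhom_ev4] ev4_D4)
  next
    case False
    have "ev4 z = ev4 (zf (Minv z))"
      using good_ev4 Minv_ok[OF False] unfolding good_def by (metis (no_types, lifting))
    then have "ev4 z r0 = 0" using r0M by simp
    then show ?thesis by (simp add: rhom.hsimps[OF rhom_ev4])
  qed
  then have "r0 * D4 = 0" using good_ev4 unfolding good_def by blast
  then have "r0 = 0" using D4_nz by simp
  then have "r = 0" using rc r0_def by simp
  have "smult (Q4 ^ k) p = [:Q4:] ^ k * p" by (simp add: poly_const_pow)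
  then have "G5 dvd [:Q4:] ^ k * p" using eq \<open>r = 0\<close> by (metis add.right_neutral dvd_triv_left)
  then have "G5 dvd [:Q4:] ^ k \<or> G5 dvd p" using G5_prime prime_elem_dvd_mult_iff by blast
  moreover have "\<not> G5 dvd [:Q4:] ^ k"
  proof
    assume "G5 dvd [:Q4:] ^ k"
    then have "G5 dvd [:Q4:]" using G5_prime prime_elem_dvd_power by blast
    then have "degree G5 \<le> degree [:Q4:]" using Q4_nz by (intro dvd_imp_degree_le) auto
    then show False using degG by simp
  qed
  ultimately show ?thesis by blast
qed

lemma one5: "a+b+c+d+e = (1::nat) \<Longrightarrow> a = 1 \<and> b = 0 \<and> c = 0 \<and> d = 0 \<and> e = 0 \<or> a = 0 \<and> b = 1 \<and> c = 0 \<and> d = 0 \<and> e = 0 \<or>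
        a = 0 \<and> b = 0 \<and> c = 1 \<and> d = 0 \<and> e = 0 \<or> a = 0 \<and> b = 0 \<and> c = 0 \<and> d = 1 \<and> e = 0 \<or>
        a = 0 \<and> b = 0 \<and> c = 0 \<and> d = 0 \<and> e = 1"
  by (auto simp: add_is_1)
lemma one3: "a+b+c = (1::nat) \<Longrightarrow> a = 1 \<and> b = 0 \<and> c = 0 \<or> a = 0 \<and> b = 1 \<and> c = 0 \<or> a = 0 \<and> b = 0 \<and> c = 1"
  by (auto simp: add_is_1)
lemma comb_m:
  fixes u0 u1 u2 u3 u4 u5 u6 u7 u8 u9 u10 u11 u12 u13 u14 :: nat
  assumes "u0+u1+u2+u3+u4 = 1" "u0+u5+u6+u7+u8 = 1" "u1+u5+u9+u10+u11 = 1" "u2+u6+u9+u12+u13 = 1" "u3+u7+u10+u12+u14 = 1" "u4+u8+u11+u13+u14 = 1"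
  shows "[u0,u1,u2,u3,u4,u5,u6,u7,u8,u9,u10,u11,u12,u13,u14] \<in> {[1,0,0,0,0,0,0,0,0,1,0,0,0,0,1], [1,0,0,0,0,0,0,0,0,0,1,0,0,1,0], [1,0,0,0,0,0,0,0,0,0,0,1,1,0,0], [0,1,0,0,0,0,1,0,0,0,0,0,0,0,1], [0,1,0,0,0,0,0,1,0,0,0,0,0,1,0], [0,1,0,0,0,0,0,0,1,0,0,0,1,0,0], [0,0,1,0,0,1,0,0,0,0,0,0,0,0,1], [0,0,1,0,0,0,0,1,0,0,0,1,0,0,0], [0,0,1,0,0,0,0,0,1,0,1,0,0,0,0], [0,0,0,1,0,1,0,0,0,0,0,0,0,1,0], [0,0,0,1,0,0,1,0,0,0,0,1,0,0,0], [0,0,0,1,0,0,0,0,1,1,0,0,0,0,0], [0,0,0,0,1,1,0,0,0,0,0,0,1,0,0], [0,0,0,0,1,0,1,0,0,0,1,0,0,0,0], [0,0,0,0,1,0,0,1,0,1,0,0,0,0,0]}"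
proof -
  from one5[OF assms(1)] show ?thesis
  proof (elim disjE conjE)
    assume c1: "u0 = 1" "u1 = 0" "u2 = 0" "u3 = 0" "u4 = 0"
    have z1: "u5 = 0" "u6 = 0" "u7 = 0" "u8 = 0" using assms(2) c1 by simp_all
    have e2: "u9+u10+u11 = 1" using assms(3) c1 z1 by simp
    from one3[OF e2] show ?thesis
    proof (elim disjE conjE)
      assume c2: "u9 = 1" "u10 = 0" "u11 = 0"
      have z2: "u6 = 0" "u12 = 0" "u13 = 0" using assms(4) c1 z1 c2 by simp_all
      have z3: "u14 = 1" using assms(5) c1 z1 c2 z2 by simp
      show ?thesis using c1 z1 c2 z2 z3 by simp
    next
      assume c2: "u9 = 0" "u10 = 1" "u11 = 0"
      have z2: "u7 = 0" "u12 = 0" "u14 = 0" using assms(5) c1 z1 c2 by simp_all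
      have z3: "u13 = 1" using assms(4) c1 z1 c2 z2 by simp
      show ?thesis using c1 z1 c2 z2 z3 by simp
    next
      assume c2: "u9 = 0" "u10 = 0" "u11 = 1"
      have z2: "u8 = 0" "u13 = 0" "u14 = 0" using assms(6) c1 z1 c2 by simp_all
      have z3: "u12 = 1" using assms(4) c1 z1 c2 z2 by simp
      show ?thesis using c1 z1 c2 z2 z3 by simp
    qed
  next
    assume c1: "u0 = 0" "u1 = 1" "u2 = 0" "u3 = 0" "u4 = 0"
    have z1: "u5 = 0" "u9 = 0" "u10 = 0" "u11 = 0" using assms(3) c1 by simp_all
    have e2: "u6+u7+u8 = 1" using assms(2) c1 z1 by simp
    from one3[OF e2] show ?thesis
    proof (elim disjE conjE)
      assume c2: "u6 = 1" "u7 = 0" "u8 = 0"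
      have z2: "u9 = 0" "u12 = 0" "u13 = 0" using assms(4) c1 z1 c2 by simp_all
      have z3: "u14 = 1" using assms(5) c1 z1 c2 z2 by simp
      show ?thesis using c1 z1 c2 z2 z3 by simp
    next
      assume c2: "u6 = 0" "u7 = 1" "u8 = 0"
      have z2: "u10 = 0" "u12 = 0" "u14 = 0" using assms(5) c1 z1 c2 by simp_all
      have z3: "u13 = 1" using assms(4) c1 z1 c2 z2 by simp
      show ?thesis using c1 z1 c2 z2 z3 by simp
    next
      assume c2: "u6 = 0" "u7 = 0" "u8 = 1"
      have z2: "u11 = 0" "u13 = 0" "u14 = 0" using assms(6) c1 z1 c2 by simp_all
      have z3: "u12 = 1" using assms(4) c1 z1 c2 z2 by simp
      show ?thesis using c1 z1 c2 z2 z3 by simp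
    qed
  next
    assume c1: "u0 = 0" "u1 = 0" "u2 = 1" "u3 = 0" "u4 = 0"
    have z1: "u6 = 0" "u9 = 0" "u12 = 0" "u13 = 0" using assms(4) c1 by simp_all
    have e2: "u5+u7+u8 = 1" using assms(2) c1 z1 by simp
    from one3[OF e2] show ?thesis
    proof (elim disjE conjE)
      assume c2: "u5 = 1" "u7 = 0" "u8 = 0"
      have z2: "u9 = 0" "u10 = 0" "u11 = 0" using assms(3) c1 z1 c2 by simp_all
      have z3: "u14 = 1" using assms(5) c1 z1 c2 z2 by simp
      show ?thesis using c1 z1 c2 z2 z3 by simp
    next
      assume c2: "u5 = 0" "u7 = 1" "u8 = 0"
      have z2: "u10 = 0" "u12 = 0" "u14 = 0" using assms(5) c1 z1 c2 by simp_all
      have z3: "u11 = 1" using assms(3) c1 z1 c2 z2 by simp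
      show ?thesis using c1 z1 c2 z2 z3 by simp
    next
      assume c2: "u5 = 0" "u7 = 0" "u8 = 1"
      have z2: "u11 = 0" "u13 = 0" "u14 = 0" using assms(6) c1 z1 c2 by simp_all
      have z3: "u10 = 1" using assms(3) c1 z1 c2 z2 by simp
      show ?thesis using c1 z1 c2 z2 z3 by simp
    qed
  next
    assume c1: "u0 = 0" "u1 = 0" "u2 = 0" "u3 = 1" "u4 = 0"
    have z1: "u7 = 0" "u10 = 0" "u12 = 0" "u14 = 0" using assms(5) c1 by simp_all
    have e2: "u5+u6+u8 = 1" using assms(2) c1 z1 by simp
    from one3[OF e2] show ?thesis
    proof (elim disjE conjE)
      assume c2: "u5 = 1" "u6 = 0" "u8 = 0"
      have z2: "u9 = 0" "u10 = 0" "u11 = 0" using assms(3) c1 z1 c2 by simp_all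
      have z3: "u13 = 1" using assms(4) c1 z1 c2 z2 by simp
      show ?thesis using c1 z1 c2 z2 z3 by simp
    next
      assume c2: "u5 = 0" "u6 = 1" "u8 = 0"
      have z2: "u9 = 0" "u12 = 0" "u13 = 0" using assms(4) c1 z1 c2 by simp_all
      have z3: "u11 = 1" using assms(3) c1 z1 c2 z2 by simp
      show ?thesis using c1 z1 c2 z2 z3 by simp
    next
      assume c2: "u5 = 0" "u6 = 0" "u8 = 1"
      have z2: "u11 = 0" "u13 = 0" "u14 = 0" using assms(6) c1 z1 c2 by simp_all
      have z3: "u9 = 1" using assms(3) c1 z1 c2 z2 by simp
      show ?thesis using c1 z1 c2 z2 z3 by simp
    qed
  next
    assume c1: "u0 = 0" "u1 = 0" "u2 = 0" "u3 = 0" "u4 = 1"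
    have z1: "u8 = 0" "u11 = 0" "u13 = 0" "u14 = 0" using assms(6) c1 by simp_all
    have e2: "u5+u6+u7 = 1" using assms(2) c1 z1 by simp
    from one3[OF e2] show ?thesis
    proof (elim disjE conjE)
      assume c2: "u5 = 1" "u6 = 0" "u7 = 0"
      have z2: "u9 = 0" "u10 = 0" "u11 = 0" using assms(3) c1 z1 c2 by simp_all
      have z3: "u12 = 1" using assms(4) c1 z1 c2 z2 by simp
      show ?thesis using c1 z1 c2 z2 z3 by simp
    next
      assume c2: "u5 = 0" "u6 = 1" "u7 = 0"
      have z2: "u9 = 0" "u12 = 0" "u13 = 0" using assms(4) c1 z1 c2 by simp_all
      have z3: "u10 = 1" using assms(3) c1 z1 c2 z2 by simp
      show ?thesis using c1 z1 c2 z2 z3 by simp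
    next
      assume c2: "u5 = 0" "u6 = 0" "u7 = 1"
      have z2: "u10 = 0" "u12 = 0" "u14 = 0" using assms(5) c1 z1 c2 by simp_all
      have z3: "u9 = 1" using assms(3) c1 z1 c2 z2 by simp
      show ?thesis using c1 z1 c2 z2 z3 by simp
    qed
  qed
qed

lemma mod4_eq: "(x::nat) \<le> 3 \<Longrightarrow> y \<le> 3 \<Longrightarrow> 4 dvd x + 3 * y \<Longrightarrow> x = y"
  by presburger

lemma comb_w:
  fixes u0 u1 u2 u3 u4 u5 u6 u7 u8 u9 u10 u11 u12 u13 u14 :: nat
  assumes s: "u0+u1+u2+u3+u4+u5+u6+u7+u8+u9+u10+u11+u12+u13+u14 = 3"
  and d0: "(4::nat) dvd (u0+u1+u2+u3+u4) + 3 * (u4+u8+u11+u13+u14)"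
  and d1: "(4::nat) dvd (u0+u5+u6+u7+u8) + 3 * (u4+u8+u11+u13+u14)"
  and d2: "(4::nat) dvd (u1+u5+u9+u10+u11) + 3 * (u4+u8+u11+u13+u14)"
  and d3: "(4::nat) dvd (u2+u6+u9+u12+u13) + 3 * (u4+u8+u11+u13+u14)"
  and d4: "(4::nat) dvd (u3+u7+u10+u12+u14) + 3 * (u4+u8+u11+u13+u14)"
shows "u0+u1+u2+u3+u4 = 1 \<and> u0+u5+u6+u7+u8 = 1 \<and> u1+u5+u9+u10+u11 = 1 \<and> u2+u6+u9+u12+u13 = 1
   \<and> u3+u7+u10+u12+u14 = 1 \<and> u4+u8+u11+u13+u14 = 1"
proof -
  define w0 where "w0 = u0+u1+u2+u3+u4"
  define w1 where "w1 = u0+u5+u6+u7+u8"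
  define w2 where "w2 = u1+u5+u9+u10+u11"
  define w3 where "w3 = u2+u6+u9+u12+u13"
  define w4 where "w4 = u3+u7+u10+u12+u14"
  define w5 where "w5 = u4+u8+u11+u13+u14"
  have sum: "w0+w1+w2+w3+w4+w5 = 6" using s by (simp add: w0_def w1_def w2_def w3_def w4_def w5_def)
  have b: "w0 \<le> 3" "w1 \<le> 3" "w2 \<le> 3" "w3 \<le> 3" "w4 \<le> 3" "w5 \<le> 3"
    using s by (simp_all add: w0_def w1_def w2_def w3_def w4_def w5_def)
  have e: "w0 = w5" "w1 = w5" "w2 = w5" "w3 = w5" "w4 = w5"
    using mod4_eq[OF b(1) b(6)] mod4_eq[OF b(2) b(6)] mod4_eq[OF b(3) b(6)] mod4_eq[OF b(4) b(6)] mod4_eq[OF b(5) b(6)]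
      d0 d1 d2 d3 d4 unfolding w0_def w1_def w2_def w3_def w4_def w5_def by simp_all
  then have "w5 = 1" using sum by simp
  then show ?thesis using e unfolding w0_def w1_def w2_def w3_def w4_def w5_def by simp
qed

lemma match0: "P M 0 1 * P M 2 3 * P M 4 5 = zf M 0 - zf M 1 - zf M 2 + zf M 3"
  by (simp add: zf_def P_def algebra_simps)
lemma match1: "P M 0 1 * P M 2 4 * P M 3 5 = - zf M 2 + zf M 4"
  by (simp add: zf_def P_def algebra_simps)
lemma match2: "P M 0 1 * P M 2 5 * P M 3 4 = - zf M 0 + zf M 1 - zf M 3 + zf M 4"
  by (simp add: zf_def P_def algebra_simps)
lemma match3: "P M 0 2 * P M 1 3 * P M 4 5 = zf M 0 - zf M 1"
  by (simp add: zf_def P_def algebra_simps)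
lemma match4: "P M 0 2 * P M 1 4 * P M 3 5 = zf M 4"
  by (simp add: zf_def P_def algebra_simps)
lemma match5: "P M 0 2 * P M 1 5 * P M 3 4 = - zf M 0 + zf M 1 + zf M 4"
  by (simp add: zf_def P_def algebra_simps)
lemma match6: "P M 0 3 * P M 1 2 * P M 4 5 = zf M 2 - zf M 3"
  by (simp add: zf_def P_def algebra_simps)
lemma match7: "P M 0 3 * P M 1 4 * P M 2 5 = zf M 1 - zf M 3 + zf M 4"
  by (simp add: zf_def P_def algebra_simps)
lemma match8: "P M 0 3 * P M 1 5 * P M 2 4 = zf M 1 - zf M 2 + zf M 4"
  by (simp add: zf_def P_def algebra_simps)
lemma match9: "P M 0 4 * P M 1 2 * P M 3 5 = zf M 2"
  by (simp add: zf_def P_def algebra_simps)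
lemma match10: "P M 0 4 * P M 1 3 * P M 2 5 = zf M 0"
  by (simp add: zf_def P_def algebra_simps)
lemma match11: "P M 0 4 * P M 1 5 * P M 2 3 = zf M 0 - zf M 2"
  by (simp add: zf_def P_def algebra_simps)
lemma match12: "P M 0 5 * P M 1 2 * P M 3 4 = zf M 3"
  by (simp add: zf_def P_def algebra_simps)
lemma match13: "P M 0 5 * P M 1 3 * P M 2 4 = zf M 1"
  by (simp add: zf_def P_def algebra_simps)
lemma match14: "P M 0 5 * P M 1 4 * P M 2 3 = zf M 1 - zf M 3"
  by (simp add: zf_def P_def algebra_simps)

lemma prod15: fixes f :: "nat \<Rightarrow> _" shows "(\<Prod>k<15. f k) = f 0 * f 1 * f 2 * f 3 * f 4 * f 5 * f 6 * f 7 * f 8 * f 9 * f 10 * f 11 * f 12 * f 13 * (f 14 :: 'a::comm_monoid_mult)"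
  by (simp add: eval_nat_numeral prod.lessThan_Suc mult_ac)
lemma sum15: fixes f :: "nat \<Rightarrow> _" shows "(\<Sum>k<15. f k) = f 0 + f 1 + f 2 + f 3 + f 4 + f 5 + f 6 + f 7 + f 8 + f 9 + f 10 + f 11 + f 12 + f 13 + (f 14 :: 'a::comm_monoid_add)"
  by (simp add: eval_nat_numeral sum.lessThan_Suc add_ac)
lemma sum5: fixes f :: "nat \<Rightarrow> _" shows "(\<Sum>k<5. f k) = f 0 + f 1 + f 2 + f 3 + (f 4 :: 'a::comm_monoid_add)"
  by (simp add: eval_nat_numeral sum.lessThan_Suc add_ac)
lemma sum6: fixes f :: "nat \<Rightarrow> _" shows "(\<Sum>k<6. f k) = f 0 + f 1 + f 2 + f 3 + f 4 + (f 5 :: 'a::comm_monoid_add)"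
  by (simp add: eval_nat_numeral sum.lessThan_Suc add_ac)
lemma prod6: fixes f :: "nat \<Rightarrow> _" shows "(\<Prod>k<6. f k) = f 0 * f 1 * f 2 * f 3 * f 4 * (f 5 :: 'a::comm_monoid_mult)"
  by (simp add: eval_nat_numeral prod.lessThan_Suc mult_ac)

definition ew :: "nat \<Rightarrow> nat \<Rightarrow> nat" where "ew i j = (if j = i then 1 else if j = 5 then 3 else 0)"
definition nn :: "nat \<Rightarrow> (nat \<Rightarrow>\<^sub>0 nat) \<Rightarrow> nat" where
  "nn i \<mu> = (\<Sum>k<15. (ew i (fst (plucker_pairs ! k)) + ew i (snd (plucker_pairs ! k))) * Poly_Mapping.lookup \<mu> k)"

lemma span_list:
  fixes u :: "nat \<Rightarrow> nat"
  assumes mexp: "\<And>M. X M = (\<Prod>k<15. pl M k ^ u k)"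
  and L: "[u 0, u 1, u 2, u 3, u 4, u 5, u 6, u 7, u 8, u 9, u 10, u 11, u 12, u 13, u 14] \<in> {[1,0,0,0,0,0,0,0,0,1,0,0,0,0,1], [1,0,0,0,0,0,0,0,0,0,1,0,0,1,0], [1,0,0,0,0,0,0,0,0,0,0,1,1,0,0], [0,1,0,0,0,0,1,0,0,0,0,0,0,0,1], [0,1,0,0,0,0,0,1,0,0,0,0,0,1,0], [0,1,0,0,0,0,0,0,1,0,0,0,1,0,0], [0,0,1,0,0,1,0,0,0,0,0,0,0,0,1], [0,0,1,0,0,0,0,1,0,0,0,1,0,0,0], [0,0,1,0,0,0,0,0,1,0,1,0,0,0,0], [0,0,0,1,0,1,0,0,0,0,0,0,0,1,0], [0,0,0,1,0,0,1,0,0,0,0,1,0,0,0], [0,0,0,1,0,0,0,0,1,1,0,0,0,0,0], [0,0,0,0,1,1,0,0,0,0,0,0,1,0,0], [0,0,0,0,1,0,1,0,0,0,1,0,0,0,0], [0,0,0,0,1,0,0,1,0,1,0,0,0,0,0]}"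
  shows "\<exists>e. \<forall>M. X M = (\<Sum>j<5. e j * zf M j)"
  using L
proof (elim insertE emptyE)
    assume "[u 0, u 1, u 2, u 3, u 4, u 5, u 6, u 7, u 8, u 9, u 10, u 11, u 12, u 13, u 14] = [1,0,0,0,0,0,0,0,0,1,0,0,0,0,1]"
    then have v: "u 0 = 1" "u 1 = 0" "u 2 = 0" "u 3 = 0" "u 4 = 0" "u 5 = 0" "u 6 = 0" "u 7 = 0" "u 8 = 0" "u 9 = 1" "u 10 = 0" "u 11 = 0" "u 12 = 0" "u 13 = 0" "u 14 = 1" by simp_all
    show ?thesis
      by (rule exI[of _ "\<lambda>j. [1,(-1::complex),(-1::complex),1,0] ! j"]) (simp only: mexp prod15 v power_one_right power_0 mult_1_left mult_1_right pl_vals match0, simp add: sum5 algebra_simps)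
  next
    assume "[u 0, u 1, u 2, u 3, u 4, u 5, u 6, u 7, u 8, u 9, u 10, u 11, u 12, u 13, u 14] = [1,0,0,0,0,0,0,0,0,0,1,0,0,1,0]"
    then have v: "u 0 = 1" "u 1 = 0" "u 2 = 0" "u 3 = 0" "u 4 = 0" "u 5 = 0" "u 6 = 0" "u 7 = 0" "u 8 = 0" "u 9 = 0" "u 10 = 1" "u 11 = 0" "u 12 = 0" "u 13 = 1" "u 14 = 0" by simp_all
    show ?thesis
      by (rule exI[of _ "\<lambda>j. [0,0,(-1::complex),0,1] ! j"]) (simp only: mexp prod15 v power_one_right power_0 mult_1_left mult_1_right pl_vals match1, simp add: sum5 algebra_simps)
  next
    assume "[u 0, u 1, u 2, u 3, u 4, u 5, u 6, u 7, u 8, u 9, u 10, u 11, u 12, u 13, u 14] = [1,0,0,0,0,0,0,0,0,0,0,1,1,0,0]"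
    then have v: "u 0 = 1" "u 1 = 0" "u 2 = 0" "u 3 = 0" "u 4 = 0" "u 5 = 0" "u 6 = 0" "u 7 = 0" "u 8 = 0" "u 9 = 0" "u 10 = 0" "u 11 = 1" "u 12 = 1" "u 13 = 0" "u 14 = 0" by simp_all
    show ?thesis
      by (rule exI[of _ "\<lambda>j. [(-1::complex),1,0,(-1::complex),1] ! j"]) (simp only: mexp prod15 v power_one_right power_0 mult_1_left mult_1_right pl_vals match2, simp add: sum5 algebra_simps)
  next
    assume "[u 0, u 1, u 2, u 3, u 4, u 5, u 6, u 7, u 8, u 9, u 10, u 11, u 12, u 13, u 14] = [0,1,0,0,0,0,1,0,0,0,0,0,0,0,1]"
    then have v: "u 0 = 0" "u 1 = 1" "u 2 = 0" "u 3 = 0" "u 4 = 0" "u 5 = 0" "u 6 = 1" "u 7 = 0" "u 8 = 0" "u 9 = 0" "u 10 = 0" "u 11 = 0" "u 12 = 0" "u 13 = 0" "u 14 = 1" by simp_all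
    show ?thesis
      by (rule exI[of _ "\<lambda>j. [1,(-1::complex),0,0,0] ! j"]) (simp only: mexp prod15 v power_one_right power_0 mult_1_left mult_1_right pl_vals match3, simp add: sum5 algebra_simps)
  next
    assume "[u 0, u 1, u 2, u 3, u 4, u 5, u 6, u 7, u 8, u 9, u 10, u 11, u 12, u 13, u 14] = [0,1,0,0,0,0,0,1,0,0,0,0,0,1,0]"
    then have v: "u 0 = 0" "u 1 = 1" "u 2 = 0" "u 3 = 0" "u 4 = 0" "u 5 = 0" "u 6 = 0" "u 7 = 1" "u 8 = 0" "u 9 = 0" "u 10 = 0" "u 11 = 0" "u 12 = 0" "u 13 = 1" "u 14 = 0" by simp_all
    show ?thesis
      by (rule exI[of _ "\<lambda>j. [0,0,0,0,1] ! j"]) (simp only: mexp prod15 v power_one_right power_0 mult_1_left mult_1_right pl_vals match4, simp add: sum5 algebra_simps)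
  next
    assume "[u 0, u 1, u 2, u 3, u 4, u 5, u 6, u 7, u 8, u 9, u 10, u 11, u 12, u 13, u 14] = [0,1,0,0,0,0,0,0,1,0,0,0,1,0,0]"
    then have v: "u 0 = 0" "u 1 = 1" "u 2 = 0" "u 3 = 0" "u 4 = 0" "u 5 = 0" "u 6 = 0" "u 7 = 0" "u 8 = 1" "u 9 = 0" "u 10 = 0" "u 11 = 0" "u 12 = 1" "u 13 = 0" "u 14 = 0" by simp_all
    show ?thesis
      by (rule exI[of _ "\<lambda>j. [(-1::complex),1,0,0,1] ! j"]) (simp only: mexp prod15 v power_one_right power_0 mult_1_left mult_1_right pl_vals match5, simp add: sum5 algebra_simps)
  next
    assume "[u 0, u 1, u 2, u 3, u 4, u 5, u 6, u 7, u 8, u 9, u 10, u 11, u 12, u 13, u 14] = [0,0,1,0,0,1,0,0,0,0,0,0,0,0,1]"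
    then have v: "u 0 = 0" "u 1 = 0" "u 2 = 1" "u 3 = 0" "u 4 = 0" "u 5 = 1" "u 6 = 0" "u 7 = 0" "u 8 = 0" "u 9 = 0" "u 10 = 0" "u 11 = 0" "u 12 = 0" "u 13 = 0" "u 14 = 1" by simp_all
    show ?thesis
      by (rule exI[of _ "\<lambda>j. [0,0,1,(-1::complex),0] ! j"]) (simp only: mexp prod15 v power_one_right power_0 mult_1_left mult_1_right pl_vals match6, simp add: sum5 algebra_simps)
  next
    assume "[u 0, u 1, u 2, u 3, u 4, u 5, u 6, u 7, u 8, u 9, u 10, u 11, u 12, u 13, u 14] = [0,0,1,0,0,0,0,1,0,0,0,1,0,0,0]"
    then have v: "u 0 = 0" "u 1 = 0" "u 2 = 1" "u 3 = 0" "u 4 = 0" "u 5 = 0" "u 6 = 0" "u 7 = 1" "u 8 = 0" "u 9 = 0" "u 10 = 0" "u 11 = 1" "u 12 = 0" "u 13 = 0" "u 14 = 0" by simp_all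
    show ?thesis
      by (rule exI[of _ "\<lambda>j. [0,1,0,(-1::complex),1] ! j"]) (simp only: mexp prod15 v power_one_right power_0 mult_1_left mult_1_right pl_vals match7, simp add: sum5 algebra_simps)
  next
    assume "[u 0, u 1, u 2, u 3, u 4, u 5, u 6, u 7, u 8, u 9, u 10, u 11, u 12, u 13, u 14] = [0,0,1,0,0,0,0,0,1,0,1,0,0,0,0]"
    then have v: "u 0 = 0" "u 1 = 0" "u 2 = 1" "u 3 = 0" "u 4 = 0" "u 5 = 0" "u 6 = 0" "u 7 = 0" "u 8 = 1" "u 9 = 0" "u 10 = 1" "u 11 = 0" "u 12 = 0" "u 13 = 0" "u 14 = 0" by simp_all
    show ?thesis
      by (rule exI[of _ "\<lambda>j. [0,1,(-1::complex),0,1] ! j"]) (simp only: mexp prod15 v power_one_right power_0 mult_1_left mult_1_right pl_vals match8, simp add: sum5 algebra_simps)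
  next
    assume "[u 0, u 1, u 2, u 3, u 4, u 5, u 6, u 7, u 8, u 9, u 10, u 11, u 12, u 13, u 14] = [0,0,0,1,0,1,0,0,0,0,0,0,0,1,0]"
    then have v: "u 0 = 0" "u 1 = 0" "u 2 = 0" "u 3 = 1" "u 4 = 0" "u 5 = 1" "u 6 = 0" "u 7 = 0" "u 8 = 0" "u 9 = 0" "u 10 = 0" "u 11 = 0" "u 12 = 0" "u 13 = 1" "u 14 = 0" by simp_all
    show ?thesis
      by (rule exI[of _ "\<lambda>j. [0,0,1,0,0] ! j"]) (simp only: mexp prod15 v power_one_right power_0 mult_1_left mult_1_right pl_vals match9, simp add: sum5 algebra_simps)
  next
    assume "[u 0, u 1, u 2, u 3, u 4, u 5, u 6, u 7, u 8, u 9, u 10, u 11, u 12, u 13, u 14] = [0,0,0,1,0,0,1,0,0,0,0,1,0,0,0]"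
    then have v: "u 0 = 0" "u 1 = 0" "u 2 = 0" "u 3 = 1" "u 4 = 0" "u 5 = 0" "u 6 = 1" "u 7 = 0" "u 8 = 0" "u 9 = 0" "u 10 = 0" "u 11 = 1" "u 12 = 0" "u 13 = 0" "u 14 = 0" by simp_all
    show ?thesis
      by (rule exI[of _ "\<lambda>j. [1,0,0,0,0] ! j"]) (simp only: mexp prod15 v power_one_right power_0 mult_1_left mult_1_right pl_vals match10, simp add: sum5 algebra_simps)
  next
    assume "[u 0, u 1, u 2, u 3, u 4, u 5, u 6, u 7, u 8, u 9, u 10, u 11, u 12, u 13, u 14] = [0,0,0,1,0,0,0,0,1,1,0,0,0,0,0]"
    then have v: "u 0 = 0" "u 1 = 0" "u 2 = 0" "u 3 = 1" "u 4 = 0" "u 5 = 0" "u 6 = 0" "u 7 = 0" "u 8 = 1" "u 9 = 1" "u 10 = 0" "u 11 = 0" "u 12 = 0" "u 13 = 0" "u 14 = 0" by simp_all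
    show ?thesis
      by (rule exI[of _ "\<lambda>j. [1,0,(-1::complex),0,0] ! j"]) (simp only: mexp prod15 v power_one_right power_0 mult_1_left mult_1_right pl_vals match11, simp add: sum5 algebra_simps)
  next
    assume "[u 0, u 1, u 2, u 3, u 4, u 5, u 6, u 7, u 8, u 9, u 10, u 11, u 12, u 13, u 14] = [0,0,0,0,1,1,0,0,0,0,0,0,1,0,0]"
    then have v: "u 0 = 0" "u 1 = 0" "u 2 = 0" "u 3 = 0" "u 4 = 1" "u 5 = 1" "u 6 = 0" "u 7 = 0" "u 8 = 0" "u 9 = 0" "u 10 = 0" "u 11 = 0" "u 12 = 1" "u 13 = 0" "u 14 = 0" by simp_all
    show ?thesis
      by (rule exI[of _ "\<lambda>j. [0,0,0,1,0] ! j"]) (simp only: mexp prod15 v power_one_right power_0 mult_1_left mult_1_right pl_vals match12, simp add: sum5 algebra_simps)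
  next
    assume "[u 0, u 1, u 2, u 3, u 4, u 5, u 6, u 7, u 8, u 9, u 10, u 11, u 12, u 13, u 14] = [0,0,0,0,1,0,1,0,0,0,1,0,0,0,0]"
    then have v: "u 0 = 0" "u 1 = 0" "u 2 = 0" "u 3 = 0" "u 4 = 1" "u 5 = 0" "u 6 = 1" "u 7 = 0" "u 8 = 0" "u 9 = 0" "u 10 = 1" "u 11 = 0" "u 12 = 0" "u 13 = 0" "u 14 = 0" by simp_all
    show ?thesis
      by (rule exI[of _ "\<lambda>j. [0,1,0,0,0] ! j"]) (simp only: mexp prod15 v power_one_right power_0 mult_1_left mult_1_right pl_vals match13, simp add: sum5 algebra_simps)
  next
    assume "[u 0, u 1, u 2, u 3, u 4, u 5, u 6, u 7, u 8, u 9, u 10, u 11, u 12, u 13, u 14] = [0,0,0,0,1,0,0,1,0,1,0,0,0,0,0]"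
    then have v: "u 0 = 0" "u 1 = 0" "u 2 = 0" "u 3 = 0" "u 4 = 1" "u 5 = 0" "u 6 = 0" "u 7 = 1" "u 8 = 0" "u 9 = 1" "u 10 = 0" "u 11 = 0" "u 12 = 0" "u 13 = 0" "u 14 = 0" by simp_all
    show ?thesis
      by (rule exI[of _ "\<lambda>j. [0,1,0,(-1::complex),0] ! j"]) (simp only: mexp prod15 v power_one_right power_0 mult_1_left mult_1_right pl_vals match14, simp add: sum5 algebra_simps)
qed

lemma span_mono:
  assumes K: "Poly_Mapping.keys \<mu> \<subseteq> {..<15}" and T: "tdeg \<mu> = 3" and D: "\<And>i. i < 5 \<Longrightarrow> 4 dvd nn i \<mu>"
  shows "\<exists>e. \<forall>M. mmon (pl M) \<mu> = (\<Sum>j<5. e j * zf M j)"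
proof (rule span_list)
  define u where "u = Poly_Mapping.lookup \<mu>"
  show "\<And>M. mmon (pl M) \<mu> = (\<Prod>k<15. pl M k ^ u k)"
    unfolding u_def by (rule mono_superset) (use K in auto)
  have s: "u 0+u 1+u 2+u 3+u 4+u 5+u 6+u 7+u 8+u 9+u 10+u 11+u 12+u 13+u 14 = 3"
    using T tdeg_superset[OF _ K] by (simp add: u_def sum15)
  have n: "nn i \<mu> = (\<Sum>k<15. (ew i (fst (plucker_pairs ! k)) + ew i (snd (plucker_pairs ! k))) * u k)" for i
    by (simp add: nn_def u_def)
  have d0: "(4::nat) dvd (u 0+u 1+u 2+u 3+u 4) + 3 * (u 4+u 8+u 11+u 13+u 14)"
    using D[of 0] unfolding n by (simp add: sum15 plucker_pairs_eq ew_def add_ac)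
  have d1: "(4::nat) dvd (u 0+u 5+u 6+u 7+u 8) + 3 * (u 4+u 8+u 11+u 13+u 14)"
    using D[of 1] unfolding n by (simp add: sum15 plucker_pairs_eq ew_def add_ac)
  have d2: "(4::nat) dvd (u 1+u 5+u 9+u 10+u 11) + 3 * (u 4+u 8+u 11+u 13+u 14)"
    using D[of 2] unfolding n by (simp add: sum15 plucker_pairs_eq ew_def add_ac)
  have d3: "(4::nat) dvd (u 2+u 6+u 9+u 12+u 13) + 3 * (u 4+u 8+u 11+u 13+u 14)"
    using D[of 3] unfolding n by (simp add: sum15 plucker_pairs_eq ew_def add_ac)
  have d4: "(4::nat) dvd (u 3+u 7+u 10+u 12+u 14) + 3 * (u 4+u 8+u 11+u 13+u 14)"
    using D[of 4] unfolding n by (simp add: sum15 plucker_pairs_eq ew_def add_ac)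
  note w = comb_w[OF s d0 d1 d2 d3 d4]
  show "[u 0, u 1, u 2, u 3, u 4, u 5, u 6, u 7, u 8, u 9, u 10, u 11, u 12, u 13, u 14] \<in> {[1,0,0,0,0,0,0,0,0,1,0,0,0,0,1], [1,0,0,0,0,0,0,0,0,0,1,0,0,1,0], [1,0,0,0,0,0,0,0,0,0,0,1,1,0,0], [0,1,0,0,0,0,1,0,0,0,0,0,0,0,1], [0,1,0,0,0,0,0,1,0,0,0,0,0,1,0], [0,1,0,0,0,0,0,0,1,0,0,0,1,0,0], [0,0,1,0,0,1,0,0,0,0,0,0,0,0,1], [0,0,1,0,0,0,0,1,0,0,0,1,0,0,0], [0,0,1,0,0,0,0,0,1,0,1,0,0,0,0], [0,0,0,1,0,1,0,0,0,0,0,0,0,1,0], [0,0,0,1,0,0,1,0,0,0,0,1,0,0,0], [0,0,0,1,0,0,0,0,1,1,0,0,0,0,0], [0,0,0,0,1,1,0,0,0,0,0,0,1,0,0], [0,0,0,0,1,0,1,0,0,0,1,0,0,0,0], [0,0,0,0,1,0,0,1,0,1,0,0,0,0,0]}"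
    apply (rule comb_m)
    using w by simp_all
qed

lemma P_colscale: "P (colscale M t) i j = t i * t j * P M i j"
  by (simp add: P_def colscale_def algebra_simps)

lemma pl_P: "pl M k = P M (fst (plucker_pairs ! k)) (snd (plucker_pairs ! k))"
  by (simp add: pl_def P_def split: prod.splits)

lemma pl_colscale: "pl (colscale M t) k = t (fst (plucker_pairs ! k)) * t (snd (plucker_pairs ! k)) * pl M k"
  by (simp add: pl_P P_colscale)

definition tz :: "nat \<Rightarrow> nat \<Rightarrow> nat \<Rightarrow> complex" where "tz i r j = \<i> ^ (r * ew i j)"

lemma sum4: fixes f :: "nat \<Rightarrow> _" shows "(\<Sum>k<4. f k) = f 0 + f 1 + f 2 + (f 3 :: 'a::comm_monoid_add)"
  by (simp add: eval_nat_numeral sum.lessThan_Suc add_ac)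

lemma i4: "\<i> ^ 4 = 1"
proof -
  have "\<i> ^ 4 = (\<i> ^ 2) ^ 2" by (simp flip: power_mult)
  then show ?thesis by simp
qed

lemma i_pow_mod: "\<i> ^ n = \<i> ^ (n mod 4)"
proof -
  have e: "4 * (n div 4) + n mod 4 = n" by simp
  have "\<i> ^ n = \<i> ^ (4 * (n div 4) + n mod 4)" by (simp only: e)
  also have "\<dots> = (\<i> ^ 4) ^ (n div 4) * \<i> ^ (n mod 4)" by (simp only: power_add power_mult)
  also have "\<dots> = \<i> ^ (n mod 4)" by (simp only: i4 power_one mult_1_left)
  finally show ?thesis .
qed

lemma torus_tz: assumes "i < 5" shows "torus (tz i r)"
proof -
  have s: "(\<Sum>j<6. ew i j) = 4" using assms
    by (auto simp: sum6 ew_def less_Suc_eq numeral_eq_Suc)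
  have "(\<Prod>j<6. tz i r j) = \<i> ^ (\<Sum>j<6. r * ew i j)"
    by (simp add: tz_def power_sum)
  also have "\<dots> = \<i> ^ (r * 4)" by (simp add: sum_distrib_left[symmetric] s)
  also have "\<dots> = (\<i> ^ 4) ^ r" by (simp only: power_mult mult.commute[of r])
  also have "\<dots> = 1" by (simp only: i4 power_one)
  finally show ?thesis unfolding torus_def by (simp add: tz_def)
qed

lemma sum_i: "(\<Sum>r<4. \<i> ^ (r * n)) = (if 4 dvd n then 4 else (0::complex))"
proof -
  have e: "\<i> ^ (r * n) = (\<i> ^ (n mod 4)) ^ r" for r
    by (metis i_pow_mod mult.commute power_mult)
  define x where "x = \<i> ^ (n mod 4)"
  have s: "(\<Sum>r<4. \<i> ^ (r * n)) = 1 + x + x * x + x * x * x"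
    unfolding e x_def[symmetric] by (simp add: sum4 power2_eq_square power3_eq_cube)
  have "n mod 4 = 0 \<or> n mod 4 = 1 \<or> n mod 4 = 2 \<or> n mod 4 = 3" by arith
  then show ?thesis
  proof (elim disjE)
    assume "n mod 4 = 0" then show ?thesis using s by (simp add: x_def dvd_eq_mod_eq_0)
  next
    assume h: "n mod 4 = 1"
    then have "x = \<i>" by (simp add: x_def)
    then show ?thesis using s h by (simp add: dvd_eq_mod_eq_0)
  next
    assume h: "n mod 4 = 2"
    then have "x = -1" by (simp add: x_def power2_eq_square)
    then show ?thesis using s h by (simp add: dvd_eq_mod_eq_0)
  next
    assume h: "n mod 4 = 3"
    then have "x = -\<i>" by (simp add: x_def power3_eq_cube)
    then show ?thesis using s h by (simp add: dvd_eq_mod_eq_0)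
  qed
qed

lemma mono_tz:
  assumes K: "Poly_Mapping.keys \<mu> \<subseteq> {..<15}"
  shows "mmon (pl (colscale M (tz i r))) \<mu> = \<i> ^ (r * nn i \<mu>) * mmon (pl M) \<mu>"
proof -
  have "mmon (pl (colscale M (tz i r))) \<mu> = (\<Prod>k<15. (pl (colscale M (tz i r)) k) ^ Poly_Mapping.lookup \<mu> k)"
    by (rule mono_superset) (use K in auto)
  also have "\<dots> = (\<Prod>k<15. \<i> ^ (r * ((ew i (fst (plucker_pairs ! k)) + ew i (snd (plucker_pairs ! k))) * Poly_Mapping.lookup \<mu> k))
                     * pl M k ^ Poly_Mapping.lookup \<mu> k)"
    by (rule prod.cong[OF refl]) (simp add: pl_colscale tz_def power_mult_distrib power_add[symmetric] power_mult[symmetric] algebra_simps)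
  also have "\<dots> = \<i> ^ (r * nn i \<mu>) * mmon (pl M) \<mu>"
    by (simp add: prod.distrib power_sum[symmetric] nn_def sum_distrib_left mono_superset[OF _ K])
  finally show ?thesis .
qed

lemma avg_step:
  assumes inv: "\<And>t M. torus t \<Longrightarrow> F (colscale M t) = F M"
    and rep: "\<And>M. F M = (\<Sum>\<mu>\<in>K. d \<mu> * mmon (pl M) \<mu>)"
    and K: "\<And>\<mu>. \<mu> \<in> K \<Longrightarrow> Poly_Mapping.keys \<mu> \<subseteq> {..<15}"
    and i: "i < 5"
  shows "F M = (\<Sum>\<mu>\<in>K. (if 4 dvd nn i \<mu> then d \<mu> else 0) * mmon (pl M) \<mu>)"
proof -
  have "4 * F M = (\<Sum>r<4. F (colscale M (tz i r)))"
    using inv[OF torus_tz[OF i]] by simp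
  also have "\<dots> = (\<Sum>r<4. \<Sum>\<mu>\<in>K. d \<mu> * (\<i> ^ (r * nn i \<mu>) * mmon (pl M) \<mu>))"
    by (simp add: rep mono_tz K cong: sum.cong)
  also have "\<dots> = (\<Sum>\<mu>\<in>K. d \<mu> * mmon (pl M) \<mu> * (\<Sum>r<4. \<i> ^ (r * nn i \<mu>)))"
    by (subst sum.swap) (simp add: sum_distrib_left mult_ac)
  also have "\<dots> = 4 * (\<Sum>\<mu>\<in>K. (if 4 dvd nn i \<mu> then d \<mu> else 0) * mmon (pl M) \<mu>)"
    unfolding sum_distrib_left[of 4] by (rule sum.cong[OF refl]) (simp add: sum_i)
  finally show ?thesis by simp
qed


lemma span_inv:
  assumes FI: "F \<in> inv_sections 1"
  shows "\<exists>c. F = (\<lambda>M. \<Sum>j<5. c j * zf M j)"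
proof -
  obtain f where fv: "vars f \<subseteq> {..<15}" and fh: "homog 3 f" and fF: "F = (\<lambda>M. meval (pl M) f)"
    and inv: "\<And>t M. torus t \<Longrightarrow> F (colscale M t) = F M"
    using FI unfolding inv_sections_def by auto
  define K where "K = Poly_Mapping.keys f"
  have K15: "\<And>\<mu>. \<mu> \<in> K \<Longrightarrow> Poly_Mapping.keys \<mu> \<subseteq> {..<15}"
    using fv unfolding K_def vars_def by auto
  have K3: "\<And>\<mu>. \<mu> \<in> K \<Longrightarrow> tdeg \<mu> = 3"
    using fh unfolding K_def homog_def by auto
  have rep0: "F M = (\<Sum>\<mu>\<in>K. Poly_Mapping.lookup f \<mu> * mmon (pl M) \<mu>)" for M
    unfolding fF K_def meval_mev mev_def by simp
  define D where "D k \<mu> = (if (\<forall>i<k. 4 dvd nn i \<mu>) then Poly_Mapping.lookup f \<mu> else 0)" for k \<mu>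
  have repk: "k \<le> 5 \<Longrightarrow> F M = (\<Sum>\<mu>\<in>K. D k \<mu> * mmon (pl M) \<mu>)" for k M
  proof (induction k arbitrary: M)
    case 0 then show ?case using rep0 by (simp add: D_def)
  next
    case (Suc k)
    have r: "\<And>M. F M = (\<Sum>\<mu>\<in>K. D k \<mu> * mmon (pl M) \<mu>)" using Suc.IH Suc.prems by simp
    have "F M = (\<Sum>\<mu>\<in>K. (if 4 dvd nn k \<mu> then D k \<mu> else 0) * mmon (pl M) \<mu>)"
      by (rule avg_step[OF inv r K15]) (use Suc.prems in simp_all)
    also have "\<dots> = (\<Sum>\<mu>\<in>K. D (Suc k) \<mu> * mmon (pl M) \<mu>)"
      by (rule sum.cong[OF refl]) (auto simp: D_def less_Suc_eq)
    finally show ?case .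
  qed
  define E where "E \<mu> = (SOME e. \<forall>M. mmon (pl M) \<mu> = (\<Sum>j<5. e j * zf M j))" for \<mu>
  have E: "\<mu> \<in> K \<Longrightarrow> D 5 \<mu> \<noteq> 0 \<Longrightarrow> mmon (pl M) \<mu> = (\<Sum>j<5. E \<mu> j * zf M j)" for \<mu> M
  proof -
    assume "\<mu> \<in> K" "D 5 \<mu> \<noteq> 0"
    then have "\<exists>e. \<forall>M. mmon (pl M) \<mu> = (\<Sum>j<5. e j * zf M j)"
      using span_mono[OF K15 K3] by (auto simp: D_def split: if_splits)
    then show ?thesis unfolding E_def by (rule someI_ex[THEN spec])
  qed
  show ?thesis
  proof (rule exI[of _ "\<lambda>j. \<Sum>\<mu>\<in>K. D 5 \<mu> * E \<mu> j"], rule ext)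
    fix M
    have "F M = (\<Sum>\<mu>\<in>K. D 5 \<mu> * mmon (pl M) \<mu>)" using repk by simp
    also have "\<dots> = (\<Sum>\<mu>\<in>K. D 5 \<mu> * (\<Sum>j<5. E \<mu> j * zf M j))"
      by (rule sum.cong[OF refl]) (metis E mult_zero_left)
    also have "\<dots> = (\<Sum>j<5. (\<Sum>\<mu>\<in>K. D 5 \<mu> * E \<mu> j) * zf M j)"
      by (simp add: sum_distrib_left sum_distrib_right mult_ac sum.swap[of _ K])
    finally show "F M = (\<Sum>j<5. (\<Sum>\<mu>\<in>K. D 5 \<mu> * E \<mu> j) * zf M j)" .
  qed
qed

definition trip :: "nat \<Rightarrow> nat \<times> nat \<times> nat" where
  "trip j = (if j = 0 then (3,6,11) else if j = 1 then (4,6,10) else if j = 2 then (3,5,13)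
             else if j = 3 then (4,5,12) else (1,7,13))"

lemma five_cases: "(j::nat) < 5 \<Longrightarrow> j = 0 \<or> j = 1 \<or> j = 2 \<or> j = 3 \<or> j = 4" by arith

lemma zf_trip: "j < 5 \<Longrightarrow> zf M j = (case trip j of (a,b,c) \<Rightarrow> pl M a * pl M b * pl M c)"
  by (drule five_cases) (elim disjE; simp add: trip_def zf_def pl_vals pl_vals(2)[simplified])

lemma zf_colscale: assumes "torus t" shows "zf (colscale M t) j = zf M j"
proof -
  have "t 0 * t 1 * t 2 * t 3 * t 4 * t 5 = 1" using assms by (simp add: torus_def prod6)
  then show ?thesis unfolding zf_def P_colscale
    by (simp add: algebra_simps)
qed

lemma fs0_inv: assumes j: "j < 5" shows "(\<lambda>M. zf M j) \<in> inv_sections 1"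
proof -
  obtain a b c where abc: "trip j = (a,b,c)" by (cases "trip j") auto
  have lt: "a < 15" "b < 15" "c < 15" using abc j by (auto simp: trip_def split: if_splits)
  define f where "f = Var a * Var b * Var c"
  have v: "vars f \<subseteq> {..<15}" unfolding f_def using lt vars_mult[of "Var a * Var b" "Var c"] vars_mult[of "Var a" "Var b"]
    by (auto simp: vars_Var)
  have h3: "homog (3 * 1) f"
  proof -
    have h: "homog (1 + 1 + 1) f" unfolding f_def by (rule homog_mult[OF homog_mult[OF homog_Var homog_Var] homog_Var])
    have e: "(1 + 1 + 1 :: nat) = 3 * 1" by simp
    show ?thesis using h by (simp only: e)
  qed
  have e: "(\<lambda>M. zf M j) = (\<lambda>M. meval (pl M) f)"
    using zf_trip[OF j] abc
    by (simp add: f_def meval_mev rhom.hmult[OF rhom_mev_id] mev_Var[OF rhom_id])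
  have tor: "\<forall>t M. torus t \<longrightarrow> zf (colscale M t) j = zf M j" using zf_colscale by blast
  show ?thesis unfolding inv_sections_def mem_Collect_eq
    by (intro conjI exI[of _ f] v h3 e tor)
qed

definition Mt :: "complex \<Rightarrow> complex \<Rightarrow> complex \<Rightarrow> complex \<Rightarrow> nat \<Rightarrow> nat \<Rightarrow> complex" where
  "Mt t2 t3 t4 t5 = (\<lambda>r c. if r = 0 then (if c = 1 then 0 else 1)
     else (if c = 0 then 0 else if c = 1 then 1 else if c = 2 then t2 else if c = 3 then t3 else if c = 4 then t4 else t5))"

lemma zf_Mt: "zf (Mt t2 t3 t4 t5) j = (if j = 0 then t4 * (t2 - t5) else if j = 1 then t5 * (t2 - t4)
   else if j = 2 then t4 * (t3 - t5) else if j = 3 then t5 * (t3 - t4) else t2 * (t3 - t5))"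
  by (simp add: zf_def P_def Mt_def algebra_simps)

lemma fs0_indep:
  assumes "\<And>M. (\<Sum>j<5. c j * zf M j) = 0"
  shows "\<forall>j<5. c j = 0"
proof -
  have e: "\<And>M. c 0 * zf M 0 + c 1 * zf M 1 + c 2 * zf M 2 + c 3 * zf M 3 + c 4 * zf M 4 = 0"
    using assms by (simp add: sum5)
  have 4: "c 4 = 0" using e[of "Mt 1 1 0 0"] by (simp add: zf_Mt)
  have 1: "c 1 = 0" using e[of "Mt 1 0 0 1"] 4 by (simp add: zf_Mt)
  have 3: "c 3 = 0" using e[of "Mt 0 1 0 1"] by (simp add: zf_Mt)
  have 0: "c 0 = 0" using e[of "Mt 1 0 1 0"] by (simp add: zf_Mt)
  have 2: "c 2 = 0" using e[of "Mt 0 1 1 0"] by (simp add: zf_Mt)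
  show ?thesis using 0 1 2 3 4 five_cases by blast
qed

definition nest5 :: "(complex \<Rightarrow> 'b::comm_ring_1) \<Rightarrow> (nat \<Rightarrow> 'b) \<Rightarrow> R5 \<Rightarrow> 'b" where
  "nest5 \<phi> a = evp (evp (evp (evp (evp \<phi> (a 0)) (a 1)) (a 2)) (a 3)) (a 4)"

definition cst5 :: "complex \<Rightarrow> R5" where "cst5 c = [:[:[:[:[:c:]:]:]:]:]"

lemma rhom_cst5: "rhom cst5"
proof -
  have "rhom (\<lambda>c. [:[:[:[:[:c:]:]:]:]:])"
    by (intro rhom_comp[OF _ rhom_constp] rhom_constp)
  then show ?thesis unfolding cst5_def[abs_def] .
qed

context chom begin
lemma nest5_facts:
  shows "rhom (nest5 \<phi> a)" and "nest5 \<phi> a (cst5 c) = \<phi> c" and "i < 5 \<Longrightarrow> nest5 \<phi> a (X5 i) = a i"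
proof -
  interpret h1: rhom "evp \<phi> (a 0)" by (rule rhom_evp)
  interpret h2: rhom "evp (evp \<phi> (a 0)) (a 1)" by (rule h1.rhom_evp)
  interpret h3: rhom "evp (evp (evp \<phi> (a 0)) (a 1)) (a 2)" by (rule h2.rhom_evp)
  interpret h4: rhom "evp (evp (evp (evp \<phi> (a 0)) (a 1)) (a 2)) (a 3)" by (rule h3.rhom_evp)
  show "rhom (nest5 \<phi> a)" unfolding nest5_def by (rule h4.rhom_evp)
  show "nest5 \<phi> a (cst5 c) = \<phi> c"
    unfolding nest5_def cst5_def by (simp only: h4.evp_const h3.evp_const h2.evp_const h1.evp_const evp_const)
  have x0: "X5 0 = [:[:[:[:[:0,1:]:]:]:]:]" by (simp add: X5_def X4_def X3_def X2_def X1_def)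
  have x1: "X5 1 = [:[:[:[:0,1:]:]:]:]" by (simp add: X5_def X4_def X3_def X2_def X1_def)
  have x2: "X5 2 = [:[:[:0,1:]:]:]" by (simp add: X5_def X4_def X3_def X2_def X1_def)
  have x3: "X5 3 = [:[:0,1:]:]" by (simp add: X5_def X4_def X3_def X2_def X1_def)
  have x4: "X5 4 = [:0,1:]" by (simp add: X5_def X4_def X3_def X2_def X1_def)
  have n0: "nest5 \<phi> a (X5 0) = a 0" unfolding nest5_def x0
    by (simp only: h4.evp_const h3.evp_const h2.evp_const h1.evp_const evp_const h4.evp_X h3.evp_X h2.evp_X h1.evp_X evp_X)
  have n1: "nest5 \<phi> a (X5 1) = a 1" unfolding nest5_def x1
    by (simp only: h4.evp_const h3.evp_const h2.evp_const h1.evp_const evp_const h4.evp_X h3.evp_X h2.evp_X h1.evp_X evp_X)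
  have n2: "nest5 \<phi> a (X5 2) = a 2" unfolding nest5_def x2
    by (simp only: h4.evp_const h3.evp_const h2.evp_const h1.evp_const evp_const h4.evp_X h3.evp_X h2.evp_X h1.evp_X evp_X)
  have n3: "nest5 \<phi> a (X5 3) = a 3" unfolding nest5_def x3
    by (simp only: h4.evp_const h3.evp_const h2.evp_const h1.evp_const evp_const h4.evp_X h3.evp_X h2.evp_X h1.evp_X evp_X)
  have n4: "nest5 \<phi> a (X5 4) = a 4" unfolding nest5_def x4
    by (simp only: h4.evp_const h3.evp_const h2.evp_const h1.evp_const evp_const h4.evp_X h3.evp_X h2.evp_X h1.evp_X evp_X)
  assume "i < 5"
  then show "nest5 \<phi> a (X5 i) = a i"
    using five_cases[of i] n0 n1 n2 n3 n4 by auto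
qed
end

lemma ev5_nest: "ev5 a = nest5 (\<lambda>c. c) a"
  by (simp add: ev5_def ev4_def ev3_def ev2_def ev1_def ev0_def nest5_def)

lemma vars_le_add: "vars f \<subseteq> S \<Longrightarrow> vars g \<subseteq> S \<Longrightarrow> vars (f + g) \<subseteq> S"
  using vars_add by blast
lemma vars_le_mult: "vars f \<subseteq> S \<Longrightarrow> vars g \<subseteq> S \<Longrightarrow> vars (f * g) \<subseteq> S"
  using vars_mult by blast
lemma vars_le_diff: "vars f \<subseteq> S \<Longrightarrow> vars g \<subseteq> S \<Longrightarrow> vars (f - g) \<subseteq> S"
  using vars_diff by blast
lemma vars_le_pow: assumes "vars f \<subseteq> S" shows "vars (f ^ n) \<subseteq> S"
  using assms
proof (induction n)
  case 0 then show ?case by (simp add: vars_one)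
next
  case (Suc n) then show ?case by (simp add: vars_le_mult)
qed
lemma vars_le_sum: "(\<And>x. x \<in> A \<Longrightarrow> vars (f x) \<subseteq> S) \<Longrightarrow> vars (sum f A) \<subseteq> S"
  using vars_sum[of f A] by blast

lemma evp_vars:
  assumes h: "rhom \<phi>" and c: "\<And>c. vars (\<phi> c) \<subseteq> S" and x: "vars x \<subseteq> S"
  shows "vars (evp \<phi> x p) \<subseteq> S"
proof -
  have "evp \<phi> x p = (\<Sum>i\<le>degree (map_poly \<phi> p). coeff (map_poly \<phi> p) i * x ^ i)"
    by (simp add: evp_def poly_altdef)
  also have "vars \<dots> \<subseteq> S"
    by (intro vars_le_sum vars_le_mult vars_le_pow x) (simp add: coeff_map_poly rhom.hzero[OF h] c)
  finally show ?thesis .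
qed

lemma nest5_vars:
  assumes h: "rhom \<phi>" and c: "\<And>c. vars (\<phi> c) \<subseteq> S" and a: "\<And>i. i < 5 \<Longrightarrow> vars (a i) \<subseteq> S"
  shows "vars (nest5 \<phi> a p) \<subseteq> S"
proof -
  have h1: "rhom (evp \<phi> (a 0))" by (rule rhom.rhom_evp[OF h])
  have h2: "rhom (evp (evp \<phi> (a 0)) (a 1))" by (rule rhom.rhom_evp[OF h1])
  have h3: "rhom (evp (evp (evp \<phi> (a 0)) (a 1)) (a 2))" by (rule rhom.rhom_evp[OF h2])
  have h4: "rhom (evp (evp (evp (evp \<phi> (a 0)) (a 1)) (a 2)) (a 3))" by (rule rhom.rhom_evp[OF h3])
  have v1: "vars (evp \<phi> (a 0) q) \<subseteq> S" for q by (rule evp_vars[OF h c a]) simp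
  have v2: "vars (evp (evp \<phi> (a 0)) (a 1) q) \<subseteq> S" for q by (rule evp_vars[OF h1 v1 a]) simp
  have v3: "vars (evp (evp (evp \<phi> (a 0)) (a 1)) (a 2) q) \<subseteq> S" for q by (rule evp_vars[OF h2 v2 a]) simp
  have v4: "vars (evp (evp (evp (evp \<phi> (a 0)) (a 1)) (a 2)) (a 3) q) \<subseteq> S" for q by (rule evp_vars[OF h3 v3 a]) simp
  show ?thesis unfolding nest5_def by (rule evp_vars[OF h4 v4 a]) simp
qed


lemma chom_id: "chom (\<lambda>x. x)" unfolding chom_def by (rule rhom_id)
lemma chom_Const: "chom Const" unfolding chom_def by (rule rhom_Const)
lemma chom_cst5: "chom cst5" unfolding chom_def by (rule rhom_cst5)

lemma gen_ideal_single: "gen_ideal N [G] = {h * G | h. vars h \<subseteq> {..<N}}"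
proof (rule set_eqI, rule iffI)
  fix x assume "x \<in> gen_ideal N [G]"
  then obtain h where "x = (\<Sum>i<1. h i * [G] ! i)" "\<forall>i<1. vars (h i) \<subseteq> {..<N}"
    unfolding gen_ideal_def by auto
  then show "x \<in> {h * G | h. vars h \<subseteq> {..<N}}" by auto
next
  fix x assume "x \<in> {h * G | h. vars h \<subseteq> {..<N}}"
  then obtain h where "x = h * G" "vars h \<subseteq> {..<N}" by auto
  then have "x = (\<Sum>i<length [G]. (\<lambda>_. h) i * [G] ! i) \<and> (\<forall>i<length [G]. vars ((\<lambda>_. h) i) \<subseteq> {..<N})" by simp
  then show "x \<in> gen_ideal N [G]" unfolding gen_ideal_def mem_Collect_eq
    by (intro exI[of _ "\<lambda>_. h"]) simp
qed

lemma delta_sum: assumes "finite A" "k \<in> A"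
  shows "(\<Sum>l\<in>A. (if k = l then 1 else 0) * f l) = (f k :: 'a::comm_ring_1)"
proof -
  have "(\<Sum>l\<in>A. (if k = l then 1 else 0) * f l) = (\<Sum>l\<in>A. if k = l then f l else 0)"
    by (rule sum.cong) auto
  also have "\<dots> = f k" using assms by simp
  finally show ?thesis .
qed

lemma gen_ideal_nil: "gen_ideal N [] = {0}"
  unfolding gen_ideal_def by simp

theorem corollary4p9:
  shows "\<forall>fs. is_basis_deg1 fs \<longrightarrow> complete_intersection (length fs) (ideal_of fs)"
proof (intro allI impI)
  fix fs assume Bas: "is_basis_deg1 fs"
  define N where "N = length fs"
  have sub: "set fs \<subseteq> inv_sections 1"
    and ind: "\<And>c. (\<forall>M. (\<Sum>k<N. c k * (fs!k) M) = 0) \<Longrightarrow> \<forall>k<N. c k = 0"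
    and spn: "\<And>F. F \<in> inv_sections 1 \<Longrightarrow> \<exists>c. F = (\<lambda>M. \<Sum>k<N. c k * (fs!k) M)"
    using Bas unfolding is_basis_deg1_def N_def by auto
  define A where "A k = (SOME c. fs!k = (\<lambda>M. \<Sum>j<5. c j * zf M j))" for k
  have hA: "fs!k = (\<lambda>M. \<Sum>j<5. A k j * zf M j)" if "k < N" for k
  proof -
    have "fs!k \<in> inv_sections 1" using sub that N_def by auto
    then have "\<exists>c. fs!k = (\<lambda>M. \<Sum>j<5. c j * zf M j)" by (rule span_inv)
    then show ?thesis unfolding A_def by (rule someI_ex)
  qed
  have hAp: "(fs!k) M = (\<Sum>j<5. A k j * zf M j)" if "k < N" for k M
    using hA[OF that] by (rule fun_cong)
  define Bm where "Bm j = (SOME c. (\<lambda>M. zf M j) = (\<lambda>M. \<Sum>k<N. c k * (fs!k) M))" for j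
  have hB: "(\<lambda>M. zf M j) = (\<lambda>M. \<Sum>k<N. Bm j k * (fs!k) M)" if "j < 5" for j
  proof -
    have "\<exists>c. (\<lambda>M. zf M j) = (\<lambda>M. \<Sum>k<N. c k * (fs!k) M)" by (rule spn[OF fs0_inv[OF that]])
    then show ?thesis unfolding Bm_def by (rule someI_ex)
  qed
  have hBp: "zf M j = (\<Sum>k<N. Bm j k * (fs!k) M)" if "j < 5" for j M
    using hB[OF that] by (rule fun_cong)
  have AB: "(\<Sum>j<5. A k j * Bm j l) = (if k = l then 1 else 0)" if k: "k < N" and l: "l < N" for k l
  proof -
    define c where "c l' = (\<Sum>j<5. A k j * Bm j l') - (if k = l' then 1 else 0)" for l'
    have "\<forall>M. (\<Sum>l'<N. c l' * (fs!l') M) = 0"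
    proof
      fix M
      have "(\<Sum>l'<N. c l' * (fs!l') M) = (\<Sum>l'<N. (\<Sum>j<5. A k j * Bm j l') * (fs!l') M) - (\<Sum>l'<N. (if k = l' then 1 else 0) * (fs!l') M)"
        by (simp add: c_def left_diff_distrib sum_subtractf)
      also have "(\<Sum>l'<N. (if k = l' then 1 else 0) * (fs!l') M) = (fs!k) M"
        using k by (simp add: delta_sum)
      also have "(\<Sum>l'<N. (\<Sum>j<5. A k j * Bm j l') * (fs!l') M) = (\<Sum>j<5. A k j * (\<Sum>l'<N. Bm j l' * (fs!l') M))"
        by (simp add: sum_distrib_left sum_distrib_right mult_ac) (rule sum.swap)
      also have "\<dots> = (\<Sum>j<5. A k j * zf M j)" using hBp by simp
      also have "\<dots> = (fs!k) M" using hAp k by simp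
      finally show "(\<Sum>l'<N. c l' * (fs!l') M) = 0" by simp
    qed
    then have "c l = 0" using ind l by blast
    then show ?thesis by (simp add: c_def)
  qed
  have BA: "(\<Sum>l<N. Bm j l * A l i) = (if j = i then 1 else 0)" if j: "j < 5" and i: "i < 5" for j i
  proof -
    define c where "c i' = (\<Sum>l<N. Bm j l * A l i') - (if j = i' then 1 else 0)" for i'
    have "(\<Sum>i'<5. c i' * zf M i') = 0" for M
    proof -
      have "(\<Sum>i'<5. c i' * zf M i') = (\<Sum>i'<5. (\<Sum>l<N. Bm j l * A l i') * zf M i') - (\<Sum>i'<5. (if j = i' then 1 else 0) * zf M i')"
        by (simp add: c_def left_diff_distrib sum_subtractf)
      also have "(\<Sum>i'<5. (if j = i' then 1 else 0) * zf M i') = zf M j"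
        using j by (simp add: delta_sum)
      also have "(\<Sum>i'<5. (\<Sum>l<N. Bm j l * A l i') * zf M i') = (\<Sum>l<N. Bm j l * (\<Sum>i'<5. A l i' * zf M i'))"
        by (simp add: sum_distrib_left sum_distrib_right mult_ac) (rule sum.swap)
      also have "\<dots> = (\<Sum>l<N. Bm j l * (fs!l) M)" using hAp by simp
      also have "\<dots> = zf M j" using hBp j by simp
      finally show ?thesis by simp
    qed
    then have "c i = 0" using fs0_indep i by blast
    then show ?thesis by (simp add: c_def)
  qed
  define L where "L j = (\<Sum>k<N. Const (Bm j k) * Var k)" for j
  define G where "G = Gf L"
  have vL: "vars (L j) \<subseteq> {..<N}" for j
    unfolding L_def by (intro vars_le_sum vars_le_mult) (auto simp: vars_Const vars_Var)
  have vG: "vars G \<subseteq> {..<N}"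
    unfolding G_def Gf_def Qf_def Cf_def by (intro vars_le_add vars_le_mult vars_le_diff vL)
  have hL: "homog 1 (L j)" for j
    unfolding L_def by (intro homog_sum homog_Const_mult homog_Var)
  have hG: "homog 3 G"
  proof -
    have q: "homog (1+1) (Qf L)" unfolding Qf_def by (intro homog_diff homog_mult hL)
    have a: "homog (1+(1+1)) (L 4 * Qf L)" by (rule homog_mult[OF hL q])
    have b: "homog (1+1+1) (Cf L)" unfolding Cf_def by (intro homog_diff homog_mult hL)
    have e1: "(1+(1+1)::nat) = 3" and e2: "(1+1+1::nat) = 3" by simp_all
    show ?thesis unfolding G_def Gf_def using a b unfolding e1 e2 by (rule homog_add)
  qed
  have evL: "meval a (L j) = (\<Sum>k<N. Bm j k * a k)" for a j
    unfolding meval_mev L_def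
    by (simp add: chom.mev_sum[OF chom_id] chom.mev_mult[OF chom_id] mev_Const[OF rhom_id] mev_Var[OF rhom_id])
  have evG: "meval a G = Gf (\<lambda>j. meval a (L j))" for a
    unfolding G_def meval_mev by (rule Gf_hom[OF rhom_mev_id])
  have evG0: "meval (\<lambda>k. (fs!k) M) G = 0" for M
  proof -
    have "meval (\<lambda>k. (fs!k) M) G = Gf (zf M)"
      unfolding evG by (rule Gf_cong) (simp add: evL hBp)
    then show ?thesis by (simp add: Gf_zf)
  qed
  have Gnz: "G \<noteq> 0"
  proof
    assume G0: "G = 0"
    define w where "w (i::nat) = (if i = 0 \<or> i = 3 \<or> i = 4 then 1 else (0::complex))" for i
    define a where "a k = (\<Sum>i<5. A k i * w i)" for k
    have "meval a (L j) = w j" if "j < 5" for j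
    proof -
      have "meval a (L j) = (\<Sum>k<N. Bm j k * (\<Sum>i<5. A k i * w i))" by (simp add: evL a_def)
      also have "\<dots> = (\<Sum>i<5. (\<Sum>k<N. Bm j k * A k i) * w i)"
        by (simp add: sum_distrib_left sum_distrib_right mult_ac) (rule sum.swap)
      also have "\<dots> = (\<Sum>i<5. (if j = i then 1 else 0) * w i)" using BA that by simp
      also have "\<dots> = w j" using that by (simp add: delta_sum)
      finally show ?thesis .
    qed
    then have "meval a G = Gf w" unfolding evG by (intro Gf_cong) simp
    also have "\<dots> = 1" by (simp add: Gf_def Qf_def Cf_def w_def)
    finally show False using G0 by (simp add: meval_mev chom.mev_zero[OF chom_id])
  qed
  show "complete_intersection (length fs) (ideal_of fs)"
    unfolding complete_intersection_def N_def[symmetric]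
  proof (intro exI[of _ "[G]"] conjI)
    show "\<forall>g\<in>set [G]. vars g \<subseteq> {..<N} \<and> (\<exists>d>0. homog d g)" using vG hG by (auto intro!: exI[of _ 3])
    show "regular_seq N [G]"
      unfolding regular_seq_def
    proof (intro conjI allI impI)
      show "1 \<notin> gen_ideal N [G]"
      proof
        assume "1 \<in> gen_ideal N [G]"
        then obtain h where "1 = h * G" by (auto simp: gen_ideal_single)
        then have "meval (\<lambda>k. (fs!k) (\<lambda>_ _. 0)) 1 = meval (\<lambda>k. (fs!k) (\<lambda>_ _. 0)) (h * G)" by simp
        then show False
          using evG0 by (simp add: meval_mev rhom.hmult[OF rhom_mev_id] rhom.hone[OF rhom_mev_id])
      qed
    next
      fix k h assume "k < length [G]" "vars h \<subseteq> {..<N}" "h * [G] ! k \<in> gen_ideal N (take k [G])"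
      then have "h * G = 0" by (simp add: gen_ideal_nil)
      then have "h = 0" using Gnz by simp
      then show "h \<in> gen_ideal N (take k [G])" using \<open>k < length [G]\<close> by (simp add: gen_ideal_nil)
    qed
    show "gen_ideal N [G] = ideal_of fs"
    proof
      show "gen_ideal N [G] \<subseteq> ideal_of fs"
      proof
        fix x assume "x \<in> gen_ideal N [G]"
        then obtain h where x: "x = h * G" and vh: "vars h \<subseteq> {..<N}" by (auto simp: gen_ideal_single)
        have "vars x \<subseteq> {..<N}" unfolding x by (rule vars_le_mult[OF vh vG])
        moreover have "meval (\<lambda>k. (fs!k) M) x = 0" for M
          unfolding x meval_mev rhom.hmult[OF rhom_mev_id] using evG0[of M] by (simp add: meval_mev)
        ultimately show "x \<in> ideal_of fs" unfolding ideal_of_def N_def by auto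
      qed
    next
      show "ideal_of fs \<subseteq> gen_ideal N [G]"
      proof
        fix g assume "g \<in> ideal_of fs"
        then have vg: "vars g \<subseteq> {..<N}" and vang: "\<And>M. meval (\<lambda>k. (fs!k) M) g = 0"
          unfolding ideal_of_def N_def by auto
        define Y where "Y k = (\<Sum>i<5. cst5 (A k i) * X5 i)" for k
        define p where "p = mev cst5 Y g"
        have "ev5 (zf M) p = 0" for M
        proof -
          have r5: "rhom (ev5 (zf M))" by (rule rhom_ev5)
          have c5: "ev5 (zf M) (cst5 c) = c" for c
            unfolding ev5_nest by (rule chom.nest5_facts(2)[OF chom_id])
          have y5: "ev5 (zf M) (Y k) = (\<Sum>i<5. A k i * zf M i)" for k
            unfolding Y_def by (simp add: rhom.hsum[OF r5] rhom.hmult[OF r5] c5 ev5_X)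
          have "ev5 (zf M) p = mev (\<lambda>c. c) (\<lambda>k. \<Sum>i<5. A k i * zf M i) g"
            unfolding p_def mev_comp[OF r5] c5 y5 ..
          also have "\<dots> = mev (\<lambda>c. c) (\<lambda>k. (fs!k) M) g"
            by (rule mev_cong) (use vg hAp in auto)
          also have "\<dots> = 0" using vang by (simp add: meval_mev)
          finally show ?thesis .
        qed
        then have "G5 dvd p" by (rule core)
        then obtain s where ps: "p = G5 * s" by (elim dvdE)
        define chi where "chi = nest5 Const L"
        have rc: "rhom chi" unfolding chi_def by (rule chom.nest5_facts(1)[OF chom_Const])
        have cc: "chi (cst5 c) = Const c" for c unfolding chi_def by (rule chom.nest5_facts(2)[OF chom_Const])
        have cx: "i < 5 \<Longrightarrow> chi (X5 i) = L i" for i unfolding chi_def by (rule chom.nest5_facts(3)[OF chom_Const])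
        have cY: "chi (Y k) = Var k" if k: "k < N" for k
        proof -
          have "chi (Y k) = (\<Sum>i<5. Const (A k i) * L i)"
            unfolding Y_def by (simp add: rhom.hsum[OF rc] rhom.hmult[OF rc] cc cx)
          also have "\<dots> = (\<Sum>l<N. Const (\<Sum>i<5. A k i * Bm i l) * Var l)"
            unfolding L_def
            by (simp add: sum_distrib_left sum_distrib_right rhom.hsum[OF rhom_Const] rhom.hmult[OF rhom_Const] mult_ac)
               (rule sum.swap)
          also have "\<dots> = (\<Sum>l<N. (if k = l then Var l else 0))"
            by (rule sum.cong[OF refl]) (simp add: AB k rhom.hone[OF rhom_Const] rhom.hzero[OF rhom_Const])
          also have "\<dots> = Var k" using k by (simp add: sum.delta)
          finally show ?thesis .
        qed
        have "chi p = mev Const Var g"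
        proof -
          have "chi p = mev (\<lambda>c. chi (cst5 c)) (\<lambda>k. chi (Y k)) g"
            unfolding p_def by (rule mev_comp[OF rc])
          also have "\<dots> = mev Const Var g"
            unfolding cc by (rule mev_cong) (use vg cY in auto)
          finally show ?thesis .
        qed
        then have g1: "g = chi p" by (simp add: mev_Var_id)
        have cG: "chi G5 = G"
          unfolding G5_def G_def Gf_hom[OF rc] by (rule Gf_cong) (simp add: cx)
        have gchi: "g = chi s * G"
          unfolding g1 ps rhom.hmult[OF rc] cG by (simp add: mult.commute)
        have "vars (chi s) \<subseteq> {..<N}"
          unfolding chi_def by (rule nest5_vars[OF rhom_Const]) (simp_all add: vars_Const vL)
        then show "g \<in> gen_ideal N [G]" using gchi by (auto simp: gen_ideal_single)
      qed
    qed
  qed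
qed

end
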